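(* Let $w\ge 4$ and $u=w-2$. Then $$\sum_{\substack{a+b+c=w\\ a\ge2,\ b,c\ge1}} T(a,b,c)=\frac23T(2)T(u)-2T(u,2)+4\Big(\zeta(u,\bar1,1)-\zeta(\bar u,1,1)+\zeta(\bar u,1,\bar1)-\zeta(u,\bar1,\bar1)\Big).$$
   Context: Multiple $T$-values: for positive integers $s_1,\dots,s_d$ with $s_1>1$, $T(s_1,\dots,s_d)=\sum_{m_1>\dots>m_d>0,\ m_j\equiv d-j+1\ (\mathrm{mod}\ 2)}\frac{2^d}{m_1^{s_1}\cdots m_d^{s_d}}$. Euler sums: $\zeta(s_1,\dots,s_d;z_1,\dots,z_d)=\sum_{n_1>\dots>n_d>0}\frac{z_1^{n_1}\cdots z_d^{n_d}}{n_1^{s_1}\cdots n_d^{s_d}}$, $z_j\in\{\pm1\}$; a bar over the $j$-th argument means $z_j=-1$, no bar means $z_j=1$. *)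

theory Defs
  imports "HOL-Analysis.Analysis"
begin

text \<open>Multiple T-value T(s_1,...,s_d), indices 0-based: the j-th (0-based) summation
  variable m!j satisfies m!j = d - j (mod 2), i.e. the paper's m_j = d-j+1 (mod 2) with
  1-based j.\<close>
definition Tval :: "nat list \<Rightarrow> real" where
  "Tval s = infsum (\<lambda>m. 2 ^ length s / (\<Prod>j<length s. real (m ! j) ^ (s ! j)))
     {m. length m = length s \<and> sorted_wrt (>) m \<and>
         (\<forall>j<length s. 0 < m ! j \<and> m ! j mod 2 = (length s - j) mod 2)}"

definition esum :: "nat list \<Rightarrow> real list \<Rightarrow> real" where
  "esum s z = infsum (\<lambda>n. \<Prod>j<length s. (z ! j) ^ (n ! j) / real (n ! j) ^ (s ! j))
     {n. length n = length s \<and> sorted_wrt (>) n \<and> (\<forall>j<length s. 0 < n ! j)}"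

end

theory Submission
  imports Defs "HOL-Real_Asymp.Real_Asymp"
begin


definition oh :: "nat \<Rightarrow> real" where "oh n = (\<Sum>i<n. 1/(2*real i+1))"

lemma telescope_has_sum:
  fixes g :: "nat \<Rightarrow> real"
  assumes lim: "g \<longlonglongrightarrow> 0" and dec: "\<And>n. g (n+m) \<le> g n"
  shows "((\<lambda>n. g n - g (n+m)) has_sum (\<Sum>i<m. g i)) UNIV"
proof -
  have ps: "(\<Sum>n<N. g n - g (n+m)) = (\<Sum>i<m. g i) - (\<Sum>i<m. g (N+i))" for N
  proof (induction N)
    case 0 then show ?case by simp
  next
    case (Suc N)
    have "(\<Sum>i<m. g (Suc N+i)) = (\<Sum>i<m. g (N+i)) - g N + g (N+m)"
    proof (induction m)
      case 0 then show ?case by simp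
    next
      case (Suc m) then show ?case by (simp add: algebra_simps)
    qed
    then show ?case using Suc by simp
  qed
  have "(\<lambda>N. \<Sum>i<m. g (N+i)) \<longlonglongrightarrow> (\<Sum>i<m. (0::real))"
    apply (rule tendsto_sum)
    using LIMSEQ_ignore_initial_segment[OF lim] by (simp add: add.commute)
  then have "(\<lambda>N. (\<Sum>i<m. g i) - (\<Sum>i<m. g (N+i))) \<longlonglongrightarrow> (\<Sum>i<m. g i) - 0"
    by (intro tendsto_diff) auto
  then have "(\<lambda>n. g n - g (n+m)) sums (\<Sum>i<m. g i)"
    unfolding sums_def using ps by simp
  then show ?thesis
    by (rule sums_nonneg_imp_has_sum) (use dec in auto)
qed



lemma harm_le_powr: "harm n \<le> 4 * real n powr (1/4)"
proof (induction n)
  case 0 then show ?case by (simp add: harm_def)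
next
  case (Suc n)
  define a where "a = real (Suc n) powr (1/4)"
  define b where "b = real n powr (1/4)"
  have a4: "a^4 = real n + 1"
  proof -
    have "a^4 = real (Suc n) powr (1/4 * 4)"
      unfolding a_def by (subst powr_realpow[symmetric]) (auto simp: powr_powr)
    then show ?thesis by simp
  qed
  have b4: "b^4 = real n"
  proof (cases "n = 0")
    case True then show ?thesis by (simp add: b_def)
  next
    case False
    have "b^4 = real n powr (1/4 * 4)"
      unfolding b_def using False by (subst powr_realpow[symmetric]) (auto simp: powr_powr)
    then show ?thesis by simp
  qed
  have b0: "0 \<le> b" by (simp add: b_def)
  have ba: "b \<le> a" unfolding a_def b_def by (rule powr_mono2) auto
  have a1: "1 \<le> a" unfolding a_def by (simp add: ge_one_powr_ge_zero)
  have "1 = (a - b) * (a^3 + a^2*b + a*b^2 + b^3)"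
  proof -
    have "(a - b) * (a^3 + a^2*b + a*b^2 + b^3) = a^4 - b^4"
      by (simp add: algebra_simps power2_eq_square power3_eq_cube power4_eq_xxxx)
    then show ?thesis using a4 b4 by simp
  qed
  also have "\<dots> \<le> (a - b) * (4 * a^4)"
  proof (rule mult_left_mono)
    have "a^2*b \<le> a^3" "a*b^2 \<le> a^3" "b^3 \<le> a^3" "a^3 \<le> a^4"
      using b0 ba a1 by (auto intro!: mult_mono power_mono simp: power2_eq_square power3_eq_cube power4_eq_xxxx)
    then show "a^3 + a^2*b + a*b^2 + b^3 \<le> 4 * a^4" by linarith
  qed (use ba in auto)
  finally have "1 / a^4 \<le> 4 * (a - b)"
    using a1 by (simp add: field_simps)
  then have "1 / (real n + 1) \<le> 4 * a - 4 * b" using a4 by simp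
  then have "harm n + 1 / (real n + 1) \<le> 4 * a" using Suc b_def by linarith
  then show ?case by (simp add: harm_Suc a_def inverse_eq_divide add.commute)
qed

lemma summable_on_bound32:
  fixes f :: "nat \<Rightarrow> real"
  assumes "\<And>i. 0 \<le> f i" "\<And>i. f i \<le> c * (real i + 1) powr (-3/2)"
  shows "f summable_on UNIV"
proof -
  have "summable (\<lambda>n. real n powr (-3/2))" by (subst summable_real_powr_iff) auto
  then have "summable (\<lambda>n. real (Suc n) powr (-3/2))" by (subst summable_Suc_iff)
  then have "summable (\<lambda>n. c * (real n + 1) powr (-3/2))" by (intro summable_mult) (simp add: add.commute)
  then have "summable f"
    by (rule summable_comparison_test[rotated]) (use assms in auto)
  then show ?thesis using assms(1) by (simp add: summable_on_UNIV_nonneg_real_iff)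
qed



lemma alt_partial_bound:
  fixes c :: "nat \<Rightarrow> real"
  assumes dec: "\<And>i. c (Suc i) \<le> c i" and nn: "\<And>i. 0 \<le> c i"
  shows "0 \<le> (\<Sum>i<n. (-1)^i * c i) \<and> (\<Sum>i<n. (-1)^i * c i) \<le> c 0 \<and>
         (even n \<longrightarrow> (\<Sum>i<n. (-1)^i * c i) + c n \<le> c 0) \<and>
         (odd n \<longrightarrow> 0 \<le> (\<Sum>i<n. (-1)^i * c i) - c n)"
proof (induction n)
  case 0 then show ?case using nn by simp
next
  case (Suc n)
  show ?case
  proof (cases "even n")
    case True
    then show ?thesis using Suc dec[of n] nn[of n] by auto
  next
    case False
    then show ?thesis using Suc dec[of n] nn[of n] by auto
  qed
qed

definition altL :: "nat \<Rightarrow> real" where "altL M = (\<Sum>t<M. (-1)^(Suc t) / real (Suc t))"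
definition H2 :: "nat \<Rightarrow> real" where "H2 M = (\<Sum>t<M. 1 / (real (Suc t))^2)"
definition Qs :: "nat \<Rightarrow> real" where "Qs M = (\<Sum>a<M. (-1)^(Suc a) / real (Suc a) * altL (M - Suc a))"
definition od :: "nat \<Rightarrow> real" where "od m = (\<Sum>t<m. if odd t then 1 / real t else 0)"
definition Ps :: "nat \<Rightarrow> real" where "Ps M = (\<Sum>m<M. (-1)^(Suc m) / real (Suc m) * od (Suc m))"

lemma altL_Suc: "altL (Suc M) = altL M + (-1)^(Suc M) / real (Suc M)"
  by (simp add: altL_def)

lemma stuffle_fin: "altL M ^ 2 = 2 * (\<Sum>m<M. (-1)^(Suc m) / real (Suc m) * altL m) + H2 M"
proof (induction M)
  case 0 then show ?case by (simp add: altL_def H2_def)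
next
  case (Suc M)
  have sq: "((-1::real)^(Suc M) / real (Suc M))^2 = 1 / (real (Suc M))^2"
    by (simp add: power_divide power_mult_distrib[symmetric] power_mult[symmetric] mult.commute[of _ 2] power_mult)
  show ?case
    unfolding altL_Suc power2_sum using Suc sq by (simp add: H2_def algebra_simps)
qed

lemma sum_recip_prod: "(\<Sum>a<M. 1 / (real (Suc a) * real (M - a))) = 2 * harm M / real (Suc M)"
proof -
  have "(\<Sum>a<M. 1 / (real (Suc a) * real (M - a))) =
        (\<Sum>a<M. (1 / real (Suc a) + 1 / real (M - a)) / real (Suc M))"
  proof (intro sum.cong refl)
    fix a assume "a \<in> {..<M}"
    then have p: "real (M - a) > 0" "real (Suc M) = real (Suc a) + real (M - a)" by auto
    have g: "1 / (A * B) = (1 / A + 1 / B) / (A + B)" if "A > 0" "B > 0" for A B :: real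
    proof -
      have "1 / A + 1 / B = (A + B) / (A * B)" using that by (simp add: field_simps)
      then show ?thesis using that by simp
    qed
    show "1 / (real (Suc a) * real (M - a)) = (1 / real (Suc a) + 1 / real (M - a)) / real (Suc M)"
      unfolding p(2) by (rule g) (use p in auto)
  qed
  also have "\<dots> = ((\<Sum>a<M. 1 / real (Suc a)) + (\<Sum>a<M. 1 / real (M - a))) / real (Suc M)"
    by (simp only: sum.distrib[symmetric] sum_divide_distrib)
  also have "(\<Sum>a<M. 1 / real (M - a)) = (\<Sum>a<M. 1 / real (Suc a))"
    using sum.nat_diff_reindex[of "\<lambda>a. 1 / real (Suc a)" M] by (simp del: of_nat_diff add: Suc_diff_Suc)
  finally show ?thesis by (simp add: harm_altdef inverse_eq_divide)
qed

lemma cauchy_fin: "Qs M = 2 * (\<Sum>m<M. (-1)^(Suc m) / real (Suc m) * harm m)"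
proof (induction M)
  case 0 then show ?case by (simp add: Qs_def)
next
  case (Suc M)
  have "Qs (Suc M) = (\<Sum>a<M. (-1)^(Suc a) / real (Suc a) * altL (M - a))"
    by (simp add: Qs_def altL_def)
  also have "\<dots> = (\<Sum>a<M. (-1)^(Suc a) / real (Suc a) * altL (M - Suc a)
                 + (-1)^(Suc M) * (1 / (real (Suc a) * real (M - a))))"
  proof (intro sum.cong refl)
    fix a assume a: "a \<in> {..<M}"
    then have e: "M - a = Suc (M - Suc a)" by auto
    have s: "(-1::real)^(Suc a) * (-1)^(M - a) = (-1)^(Suc M)"
      using a by (simp add: power_add[symmetric])
    have l: "altL (M - a) = altL (M - Suc a) + (-1)^(M - a) / real (M - a)"
      using altL_Suc[of "M - Suc a"] e by simp
    have "(-1)^(Suc a) / real (Suc a) * altL (M - a) = (-1)^(Suc a) / real (Suc a) * altL (M - Suc a)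
                 + ((-1)^(Suc a) * (-1)^(M - a)) * (1 / (real (Suc a) * real (M - a)))"
      unfolding l by (simp del: of_nat_diff add: divide_inverse distrib_left mult_ac)
    then show "(-1)^(Suc a) / real (Suc a) * altL (M - a) = (-1)^(Suc a) / real (Suc a) * altL (M - Suc a)
                 + (-1)^(Suc M) * (1 / (real (Suc a) * real (M - a)))"
      unfolding s .
  qed
  also have "\<dots> = Qs M + (-1)^(Suc M) * (\<Sum>a<M. 1 / (real (Suc a) * real (M - a)))"
    by (simp only: sum.distrib Qs_def sum_distrib_left)
  also have "\<dots> = Qs M + (-1)^(Suc M) * (2 * harm M / real (Suc M))"
    by (simp only: sum_recip_prod)
  finally show ?case using Suc by (simp add: field_simps)
qed

lemma od_Suc: "od (Suc n) = (harm n - altL n) / 2"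
proof (induction n)
  case 0 then show ?case by (simp add: od_def altL_def harm_def)
next
  case (Suc n)
  define x where "x = 1 / real (Suc n)"
  have st: "od (Suc (Suc n)) = od (Suc n) + (if odd (Suc n) then x else 0)"
    by (simp add: od_def x_def)
  have h: "harm (Suc n) = harm n + x" by (simp add: harm_Suc inverse_eq_divide x_def)
  show ?case
  proof (cases "even n")
    case True
    then have m: "altL (Suc n) = altL n - x" by (simp add: altL_Suc x_def)
    show ?thesis unfolding st h m Suc.IH using True by (simp add: field_simps)
  next
    case False
    then have m: "altL (Suc n) = altL n + x" by (simp add: altL_Suc x_def)
    show ?thesis unfolding st h m Suc.IH using False by (simp add: field_simps)
  qed
qed

lemma od_even_odd: "od (2*K) = oh K \<and> od (2*K+1) = oh K"
proof (induction K)
  case 0 then show ?case by (simp add: od_def oh_def)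
next
  case (Suc K)
  have a: "od (2*K+2) = od (2*K+1) + 1 / real (2*K+1)"
    by (simp add: od_def)
  have b: "od (2*K+3) = od (2*K+2)"
    by (simp add: od_def numeral_3_eq_3)
  have c: "oh (Suc K) = oh K + 1 / real (2*K+1)" by (simp add: oh_def)
  show ?case using a b c Suc by (simp add: numeral_3_eq_3)
qed

lemma Ps_eq: "4 * Ps M = Qs M - altL M ^ 2 + H2 M"
proof -
  define c where "c m = (-1::real)^(Suc m) / real (Suc m)" for m
  have "Ps M = (\<Sum>m<M. c m * od (Suc m))" by (simp add: Ps_def c_def)
  also have "\<dots> = (\<Sum>m<M. c m * harm m / 2 - c m * altL m / 2)"
    unfolding od_Suc by (intro sum.cong refl) (simp add: algebra_simps diff_divide_distrib)
  also have "\<dots> = (\<Sum>m<M. c m * harm m) / 2 - (\<Sum>m<M. c m * altL m) / 2"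
    by (simp add: sum_subtractf sum_divide_distrib)
  finally show ?thesis using stuffle_fin[of M] cauchy_fin[of M] unfolding c_def by simp
qed

lemma altL_block: "\<bar>altL (s + n) - altL s\<bar> \<le> 1 / real (Suc s)"
proof -
  have "altL (s + n) - altL s = (\<Sum>i<n. (-1)^(Suc (s+i)) / real (Suc (s+i)))"
    by (induction n) (simp_all add: altL_def)
  also have "\<dots> = (-1)^(Suc s) * (\<Sum>i<n. (-1)^i * (1 / real (Suc (s+i))))"
    by (simp add: sum_distrib_left power_add)
  finally have e: "\<bar>altL (s + n) - altL s\<bar> = \<bar>\<Sum>i<n. (-1)^i * (1 / real (Suc (s+i)))\<bar>"
    by (simp add: abs_mult)
  have "0 \<le> (\<Sum>i<n. (-1)^i * (1 / real (Suc (s+i)))) \<and> (\<Sum>i<n. (-1)^i * (1 / real (Suc (s+i)))) \<le> 1 / real (Suc (s+0))"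
    using alt_partial_bound[of "\<lambda>i. 1 / real (Suc (s+i))" n] by (auto simp: frac_le)
  then show ?thesis unfolding e by simp
qed

lemma R_bound: "\<bar>altL M ^ 2 - Qs M\<bar> \<le> 2 * harm M / real (Suc M)"
proof -
  define c where "c a = (-1::real)^(Suc a) / real (Suc a)" for a
  have e: "altL M = (\<Sum>a<M. c a)" by (simp add: altL_def c_def)
  have "altL M ^ 2 = (\<Sum>a<M. c a) * altL M" using e by (simp add: power2_eq_square)
  also have "\<dots> = (\<Sum>a<M. c a * altL M)" by (simp add: sum_distrib_right)
  finally have "altL M ^ 2 - Qs M = (\<Sum>a<M. c a * altL M) - (\<Sum>a<M. c a * altL (M - Suc a))"
    by (simp add: Qs_def c_def)
  also have "\<dots> = (\<Sum>a<M. c a * (altL M - altL (M - Suc a)))"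
    by (simp add: sum_subtractf[symmetric] right_diff_distrib)
  finally have eq: "altL M ^ 2 - Qs M = (\<Sum>a<M. c a * (altL M - altL (M - Suc a)))" .
  have "\<bar>\<Sum>a<M. c a * (altL M - altL (M - Suc a))\<bar> \<le> (\<Sum>a<M. \<bar>c a * (altL M - altL (M - Suc a))\<bar>)"
    by (rule sum_abs)
  also have "\<dots> \<le> (\<Sum>a<M. 1 / (real (Suc a) * real (M - a)))"
  proof (intro sum_mono)
    fix a assume a: "a \<in> {..<M}"
    have "M = (M - Suc a) + Suc a" using a by auto
    then have "\<bar>altL M - altL (M - Suc a)\<bar> \<le> 1 / real (Suc (M - Suc a))"
      using altL_block[of "M - Suc a" "Suc a"] by simp
    also have "Suc (M - Suc a) = M - a" using a by auto
    finally have b: "\<bar>altL M - altL (M - Suc a)\<bar> \<le> 1 / real (M - a)" .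
    have "\<bar>c a * (altL M - altL (M - Suc a))\<bar> = \<bar>altL M - altL (M - Suc a)\<bar> / real (Suc a)"
      by (simp add: c_def abs_mult)
    also have "\<dots> \<le> (1 / real (M - a)) / real (Suc a)"
      by (rule divide_right_mono) (use b in auto)
    also have "\<dots> = 1 / (real (Suc a) * real (M - a))" by (simp del: of_nat_diff)
    finally show "\<bar>c a * (altL M - altL (M - Suc a))\<bar> \<le> 1 / (real (Suc a) * real (M - a))" .
  qed
  finally show ?thesis unfolding eq sum_recip_prod .
qed



lemma isq: "(\<lambda>n. 1 / (real n + 1)^2) sums (pi^2/6)"
  using inverse_squares_sums by (simp add: add.commute)

lemma Ps_tendsto: "Ps \<longlonglongrightarrow> pi^2/24"
proof -
  have h2: "H2 \<longlonglongrightarrow> pi^2/6"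
    using isq unfolding sums_def H2_def by (simp add: add.commute)
  have b: "(\<lambda>M. 8 * real M powr (1/4) / real (Suc M)) \<longlonglongrightarrow> 0" by real_asymp
  have r: "(\<lambda>M. altL M ^ 2 - Qs M) \<longlonglongrightarrow> 0"
  proof (rule Lim_null_comparison[OF _ b])
    show "\<forall>\<^sub>F M in sequentially. norm (altL M ^ 2 - Qs M) \<le> 8 * real M powr (1/4) / real (Suc M)"
    proof (intro always_eventually allI)
      fix M
      have "norm (altL M ^ 2 - Qs M) \<le> 2 * harm M / real (Suc M)" using R_bound by simp
      also have "\<dots> \<le> 2 * (4 * real M powr (1/4)) / real (Suc M)"
        by (intro divide_right_mono mult_left_mono harm_le_powr) auto
      finally show "norm (altL M ^ 2 - Qs M) \<le> 8 * real M powr (1/4) / real (Suc M)" by simp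
    qed
  qed
  have "(\<lambda>M. (H2 M - (altL M ^ 2 - Qs M)) / 4) \<longlonglongrightarrow> (pi^2/6 - 0) / 4"
    by (intro tendsto_divide tendsto_diff h2 r tendsto_const) simp
  moreover have "Ps = (\<lambda>M. (H2 M - (altL M ^ 2 - Qs M)) / 4)"
  proof
    fix M show "Ps M = (H2 M - (altL M ^ 2 - Qs M)) / 4" using Ps_eq[of M] by simp
  qed
  ultimately show ?thesis by simp
qed

lemma Ps_partial: "(\<Sum>N<Suc K. oh N * (1/(2*real N) - 1/(2*real N+1))) = Ps (2*K+1)"
proof (induction K)
  case 0 then show ?case by (simp add: oh_def Ps_def od_def)
next
  case (Suc K)
  have "Ps (2 * Suc K + 1) = Ps (2*K+1) + (-1)^(Suc (2*K+1)) / real (Suc (2*K+1)) * od (2*(Suc K))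
            + (-1)^(Suc (2*K+2)) / real (Suc (2*K+2)) * od (2*(Suc K)+1)"
    by (simp add: Ps_def)
  also have "\<dots> = Ps (2*K+1) + oh (Suc K) * (1/(2*real (Suc K)) - 1/(2*real (Suc K)+1))"
  proof -
    have e1: "(-1::real)^(Suc (2*K+1)) = 1" "(-1::real)^(Suc (2*K+2)) = -1" by simp_all
    have e2: "real (Suc (2*K+1)) = 2*real (Suc K)" "real (Suc (2*K+2)) = 2*real (Suc K)+1" by simp_all
    show ?thesis unfolding e1 e2 using od_even_odd[of "Suc K"] by (simp add: algebra_simps)
  qed
  finally show ?case using Suc by simp
qed

lemma C_has_sum: "((\<lambda>N. oh N * (1/(2*real N) - 1/(2*real N+1))) has_sum (pi^2/24)) UNIV"
proof -
  have "filterlim (\<lambda>K::nat. 2*K+1) sequentially sequentially" by real_asymp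
  then have "(\<lambda>K. Ps (2*K+1)) \<longlonglongrightarrow> pi^2/24"
    by (rule filterlim_compose[OF Ps_tendsto])
  moreover have "(\<lambda>K. \<Sum>N<Suc K. oh N * (1/(2*real N) - 1/(2*real N+1))) = (\<lambda>K. Ps (2*K+1))"
    by (rule ext) (rule Ps_partial)
  ultimately have "(\<lambda>K. \<Sum>N<Suc K. oh N * (1/(2*real N) - 1/(2*real N+1))) \<longlonglongrightarrow> pi^2/24"
    by simp
  then have "(\<lambda>N. oh N * (1/(2*real N) - 1/(2*real N+1))) sums (pi^2/24)"
    unfolding sums_def by (rule filterlim_sequentially_Suc[THEN iffD1])
  moreover have "0 \<le> oh N * (1/(2*real N) - 1/(2*real N+1))" for N
  proof (cases "N = 0")
    case True then show ?thesis by (simp add: oh_def)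
  next
    case False
    have "0 \<le> oh N" unfolding oh_def by (intro sum_nonneg) auto
    moreover have "1/(2*real N+1) \<le> 1/(2*real N)" using False by (intro divide_left_mono) auto
    ultimately show ?thesis by simp
  qed
  ultimately show ?thesis by (intro sums_nonneg_imp_has_sum) auto
qed

lemma odd_squares_sums: "(\<lambda>n. 1 / (2 * real n + 1)^2) sums (pi^2/8)"
proof -
  have "(\<lambda>n. \<Sum>i\<in>{n*2..<n*2+2}. 1 / (real i + 1)^2) sums (pi^2/6)"
    using sums_group[OF isq, of 2] by simp
  moreover have "(\<Sum>i\<in>{n*2..<n*2+2}. 1 / (real i + 1)^2) = 1 / (2 * real n + 1)^2 + (1/4) * (1 / (real n + 1)^2)" for n
  proof -
    have "{n*2..<n*2+2} = {n*2, n*2+1}" by auto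
    then show ?thesis by (simp add: field_simps power2_eq_square)
  qed
  ultimately have a: "(\<lambda>n. 1 / (2 * real n + 1)^2 + (1/4) * (1 / (real n + 1)^2)) sums (pi^2/6)"
    by (metis (no_types, lifting) sums_cong)
  have b: "(\<lambda>n. (1/4) * (1 / (real n + 1)^2)) sums ((1/4) * (pi^2/6))"
    by (rule sums_mult[OF isq])
  have "(\<lambda>n. (1 / (2 * real n + 1)^2 + (1/4) * (1 / (real n + 1)^2)) - (1/4) * (1 / (real n + 1)^2)) sums (pi^2/6 - (1/4) * (pi^2/6))"
    by (rule sums_diff[OF a b])
  then show ?thesis by simp
qed



lemma has_sum_diff:
  fixes f g :: "'a \<Rightarrow> real"
  assumes "(f has_sum a) A" "(g has_sum b) A"
  shows "((\<lambda>x. f x - g x) has_sum (a - b)) A"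
proof -
  have "((\<lambda>x. - g x) has_sum (-b)) A" using assms(2) by (simp add: has_sum_uminus)
  from has_sum_add[OF assms(1) this] show ?thesis by simp
qed

lemma has_sum_sum_fin:
  fixes f :: "'i \<Rightarrow> 'a \<Rightarrow> real"
  assumes "finite I" "\<And>l. l \<in> I \<Longrightarrow> (f l has_sum a l) A"
  shows "((\<lambda>x. \<Sum>l\<in>I. f l x) has_sum (\<Sum>l\<in>I. a l)) A"
  using assms
proof (induction I rule: finite_induct)
  case empty then show ?case by simp
next
  case (insert l I)
  then show ?case by (simp add: has_sum_add)
qed

lemma has_sum_prod_set:
  fixes f :: "'a \<Rightarrow> real" and g :: "'b \<Rightarrow> real"
  assumes f: "(f has_sum a) A" and g: "(g has_sum b) B"
    and nf: "\<And>x. x \<in> A \<Longrightarrow> 0 \<le> f x" and ng: "\<And>y. y \<in> B \<Longrightarrow> 0 \<le> g y"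
  shows "((\<lambda>(x,y). f x * g y) has_sum (a * b)) (A \<times> B)"
proof -
  have inner: "((\<lambda>y. (\<lambda>(x,y). f x * g y) (x, y)) has_sum (f x * b)) B" for x
    using has_sum_cmult_right[OF g, of "f x"] by simp
  have outer: "((\<lambda>x. f x * b) has_sum (a * b)) A"
    using has_sum_cmult_left[OF f, of b] by simp
  have "(\<lambda>(x,y). f x * g y) summable_on Sigma A (\<lambda>_. B)"
    by (rule summable_on_SigmaI[OF inner]) (use outer nf ng in \<open>auto simp: summable_on_def\<close>)
  then show ?thesis
    using has_sum_SigmaI[OF inner outer] by simp
qed

lemma has_sum_nonneg_Sigma:
  fixes f :: "'a \<times> 'b \<Rightarrow> real"
  assumes inner: "\<And>x. x \<in> A \<Longrightarrow> ((\<lambda>y. f (x, y)) has_sum g x) (B x)"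
    and outer: "(g has_sum S) A"
    and nn: "\<And>x y. x \<in> A \<Longrightarrow> y \<in> B x \<Longrightarrow> 0 \<le> f (x, y)"
  shows "(f has_sum S) (Sigma A B)"
proof -
  have "f summable_on Sigma A B"
    by (rule summable_on_SigmaI[OF inner]) (use outer nn in \<open>auto simp: summable_on_def\<close>)
  then show ?thesis using has_sum_SigmaI[OF inner outer] by simp
qed

lemma oh_nonneg: "0 \<le> oh n" unfolding oh_def by (intro sum_nonneg) auto

lemma oh_le_harm: "oh n \<le> harm n"
  unfolding oh_def harm_altdef by (intro sum_mono) (auto simp: inverse_eq_divide frac_le)

lemma oh_mono: "m \<le> n \<Longrightarrow> oh m \<le> oh n"
  unfolding oh_def by (intro sum_mono2) auto

lemma E_has_sum:
  assumes "l \<ge> 1"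
  shows "((\<lambda>n. 1 / ((2*real n+1) * (2*real n+2*real l+1))) has_sum (oh l / (2*real l))) UNIV"
proof -
  define g where "g n = 1 / (2*real n+1)" for n
  have lim: "g \<longlonglongrightarrow> 0" unfolding g_def by real_asymp
  have "((\<lambda>n. g n - g (n+l)) has_sum (\<Sum>i<l. g i)) UNIV"
    by (rule telescope_has_sum[OF lim]) (auto simp: g_def frac_le)
  then have "((\<lambda>n. (1 / (2*real l)) * (g n - g (n+l))) has_sum ((1 / (2*real l)) * (\<Sum>i<l. g i))) UNIV"
    by (rule has_sum_cmult_right)
  moreover have "(1 / (2*real l)) * (g n - g (n+l)) = 1 / ((2*real n+1) * (2*real n+2*real l+1))" for n
    using assms by (simp add: g_def field_simps)
  moreover have "(\<Sum>i<l. g i) = oh l" by (simp add: g_def oh_def)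
  ultimately show ?thesis by simp
qed

lemma Y_has_sum:
  "((\<lambda>n. 1 / (2*real m+2*real n+3) - 1 / (2*real m+2*real n+2*real k+3)) has_sum
      (\<Sum>l<k. 1 / (2*real m+2*real l+3))) UNIV"
proof -
  define g where "g n = 1 / (2*real m+2*real n+3)" for n
  have lim: "g \<longlonglongrightarrow> 0" unfolding g_def by real_asymp
  have "((\<lambda>n. g n - g (n+k)) has_sum (\<Sum>i<k. g i)) UNIV"
    by (rule telescope_has_sum[OF lim]) (auto simp: g_def frac_le)
  then show ?thesis by (simp add: g_def algebra_simps)
qed

lemma harm_sq_bound: "1 + harm j ^ 2 \<le> 17 * (real j + 1) powr (1/2)"
proof -
  have "harm j ^ 2 \<le> (4 * real j powr (1/4)) ^ 2"
    by (intro power_mono harm_le_powr) (simp add: harm_nonneg)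
  also have "(4 * real j powr (1/4)) ^ 2 = 16 * (real j powr (1/4) * real j powr (1/4))"
    by (simp add: power2_eq_square)
  also have "real j powr (1/4) * real j powr (1/4) = real j powr (1/4 + 1/4)"
    by (rule powr_add[symmetric])
  also have "real j powr (1/4 + 1/4) = real j powr (1/2)" by simp
  also have "16 * real j powr (1/2) \<le> 16 * (real j + 1) powr (1/2)"
    by (intro mult_left_mono powr_mono2) auto
  finally have "1 + harm j ^ 2 \<le> 1 + 16 * (real j + 1) powr (1/2)" by simp
  moreover have "1 \<le> (real j + 1) powr (1/2)" by (simp add: ge_one_powr_ge_zero)
  ultimately show ?thesis by simp
qed

lemma summable_harm2:
  fixes f :: "nat \<Rightarrow> real"
  assumes "0 \<le> c" "\<And>j. 0 \<le> f j" "\<And>j. f j \<le> c * (1 + harm j ^ 2) / (real j + 1)^2"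
  shows "f summable_on UNIV"
proof (rule summable_on_bound32)
  fix j
  show "0 \<le> f j" by fact
  have "f j \<le> c * (1 + harm j ^ 2) / (real j + 1)^2" by fact
  also have "\<dots> \<le> c * (17 * (real j + 1) powr (1/2)) / (real j + 1)^2"
    by (intro divide_right_mono mult_left_mono harm_sq_bound assms(1)) auto
  also have "(real j + 1) powr (1/2) / (real j + 1)^2 = (real j + 1) powr (-3/2)"
  proof -
    have "(real j + 1)^2 = (real j + 1) powr 2"
      using powr_realpow[of "real j + 1" 2] by simp
    then have "(real j + 1) powr (1/2) / (real j + 1)^2 = (real j + 1) powr (1/2 - 2)"
      by (simp only: powr_diff)
    then show ?thesis by simp
  qed
  then have "c * (17 * (real j + 1) powr (1/2)) / (real j + 1)^2 = (17 * c) * (real j + 1) powr (-3/2)"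
    by (simp add: field_simps)
  finally show "f j \<le> (17 * c) * (real j + 1) powr (-3/2)" .
qed



definition Pn :: "nat \<Rightarrow> real" where "Pn i = 2 * real i + 1"
definition Qn :: "nat \<Rightarrow> real" where "Qn j = 2 * real j"

definition RR :: "(nat \<times> nat \<times> nat) set" where "RR = {(i,j,k). k < j \<and> j \<le> i}"

definition fA4 :: "nat \<Rightarrow> nat \<times> nat \<times> nat \<Rightarrow> real" where
  "fA4 u = (\<lambda>(i,j,k). 1 / (Qn j ^ (u-1) * Pn i * (Pn i - Qn j) * (Qn j - Pn k)))"

lemma shift_has_sum:
  fixes f :: "nat \<Rightarrow> real"
  shows "(f has_sum s) {i. j \<le> i} \<longleftrightarrow> ((\<lambda>n. f (j + n)) has_sum s) UNIV"
  by (rule has_sum_reindex_bij_witness[of _ "\<lambda>n. j + n" "\<lambda>i. i - j"]) auto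

lemma refl_oh: "(\<Sum>k<j. 1 / (Qn j - Pn k)) = oh j"
proof -
  have "(\<Sum>k<j. 1 / (Qn j - Pn k)) = (\<Sum>k<j. 1 / (2 * real (j - Suc k) + 1))"
    by (intro sum.cong refl) (auto simp: Qn_def Pn_def of_nat_diff)
  also have "\<dots> = (\<Sum>k<j. 1 / (2 * real k + 1))"
    by (rule sum.nat_diff_reindex)
  finally show ?thesis by (simp add: oh_def)
qed

lemma A4_slice:
  assumes u: "u \<ge> 1"
  shows "((\<lambda>(i,k). fA4 u (i,j,k)) has_sum (oh j ^ 2 / Qn j ^ u)) ({i. j \<le> i} \<times> {..<j})"
proof (cases "j = 0")
  case True then show ?thesis by (simp add: oh_def)
next
  case False
  then have j: "j \<ge> 1" by simp
  have f: "((\<lambda>i. 1 / (Pn i * (Pn i - Qn j))) has_sum (oh j / (2 * real j))) {i. j \<le> i}"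
    unfolding shift_has_sum using E_has_sum[OF j]
    by (simp add: Pn_def Qn_def algebra_simps)
  have g: "((\<lambda>k. 1 / (Qn j - Pn k)) has_sum oh j) {..<j}"
    by (rule has_sum_finiteI) (simp_all add: refl_oh)
  have "((\<lambda>(i,k). 1 / (Pn i * (Pn i - Qn j)) * (1 / (Qn j - Pn k))) has_sum (oh j / (2 * real j) * oh j)) ({i. j \<le> i} \<times> {..<j})"
    by (rule has_sum_prod_set[OF f g]) (auto simp: Pn_def Qn_def)
  then have "((\<lambda>x. (1 / Qn j ^ (u-1)) * (\<lambda>(i,k). 1 / (Pn i * (Pn i - Qn j)) * (1 / (Qn j - Pn k))) x) has_sum ((1 / Qn j ^ (u-1)) * (oh j / (2 * real j) * oh j))) ({i. j \<le> i} \<times> {..<j})"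
    by (rule has_sum_cmult_right)
  moreover have "(1 / Qn j ^ (u-1)) * (oh j / (2 * real j) * oh j) = oh j ^ 2 / Qn j ^ u"
  proof -
    have "Qn j ^ u = Qn j ^ (u-1) * (2 * real j)" using u by (simp add: Qn_def power_eq_if[of _ u])
    then show ?thesis by (simp add: power2_eq_square)
  qed
  moreover have "(1 / Qn j ^ (u-1)) * (\<lambda>(i,k). 1 / (Pn i * (Pn i - Qn j)) * (1 / (Qn j - Pn k))) x = (\<lambda>(i,k). fA4 u (i,j,k)) x" for x
    by (cases x) (simp add: fA4_def)
  ultimately show ?thesis by simp
qed

lemma fA4_nonneg: "k < j \<Longrightarrow> j \<le> i \<Longrightarrow> 0 \<le> fA4 u (i,j,k)"
  by (auto simp: fA4_def Pn_def Qn_def intro!: mult_nonneg_nonneg)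

lemma Qn_pow_ge: assumes "u \<ge> 2" "j \<ge> 1" shows "(real j + 1)^2 \<le> Qn j ^ u"
proof -
  have "real j + 1 \<le> Qn j" using assms by (simp add: Qn_def)
  then have "(real j + 1)^2 \<le> Qn j ^ 2" by (rule power_mono) simp
  also have "\<dots> \<le> Qn j ^ u" by (rule power_increasing) (use assms in \<open>auto simp: Qn_def\<close>)
  finally show ?thesis .
qed

lemma Pn_pow_ge: assumes "u \<ge> 2" shows "(real j + 1)^2 \<le> Pn j ^ u"
proof -
  have "real j + 1 \<le> Pn j" by (simp add: Pn_def)
  then have "(real j + 1)^2 \<le> Pn j ^ 2" by (rule power_mono) simp
  also have "\<dots> \<le> Pn j ^ u" by (rule power_increasing) (use assms in \<open>auto simp: Pn_def\<close>)
  finally show ?thesis .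
qed

lemma S4_summable:
  assumes u: "u \<ge> 2"
  shows "(\<lambda>j. oh j ^ 2 / Qn j ^ u) summable_on UNIV"
proof (rule summable_harm2[of 1])
  fix j
  show "0 \<le> oh j ^ 2 / Qn j ^ u" by (simp add: Qn_def)
  show "oh j ^ 2 / Qn j ^ u \<le> 1 * (1 + harm j ^ 2) / (real j + 1)^2"
  proof (cases "j = 0")
    case True then show ?thesis by (simp add: oh_def)
  next
    case False
    have "oh j ^ 2 \<le> harm j ^ 2" by (rule power_mono[OF oh_le_harm oh_nonneg])
    then have "oh j ^ 2 \<le> 1 + harm j ^ 2" by simp
    then show ?thesis using Qn_pow_ge[OF u, of j] False
      by simp (rule frac_le, auto)
  qed
qed simp

lemma A4_total:
  assumes u: "u \<ge> 2"
  shows "(fA4 u has_sum (\<Sum>\<^sub>\<infinity>j. oh j ^ 2 / Qn j ^ u)) RR"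
proof -
  have "((\<lambda>(j,(i,k)). fA4 u (i,j,k)) has_sum (\<Sum>\<^sub>\<infinity>j. oh j ^ 2 / Qn j ^ u)) (Sigma UNIV (\<lambda>j. {i. j \<le> i} \<times> {..<j}))"
  proof (rule has_sum_nonneg_Sigma)
    show "((\<lambda>y. (\<lambda>(j,(i,k)). fA4 u (i,j,k)) (j, y)) has_sum (oh j ^ 2 / Qn j ^ u)) ({i. j \<le> i} \<times> {..<j})" for j
    proof -
      have "(\<lambda>y. (\<lambda>(j,(i,k)). fA4 u (i,j,k)) (j, y)) = (\<lambda>(i,k). fA4 u (i,j,k))" by (auto simp: fun_eq_iff)
      then show ?thesis using A4_slice[of u j] u by simp
    qed
    show "((\<lambda>j. oh j ^ 2 / Qn j ^ u) has_sum (\<Sum>\<^sub>\<infinity>j. oh j ^ 2 / Qn j ^ u)) UNIV"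
      using S4_summable[OF u] by (rule has_sum_infsum)
  qed (auto intro: fA4_nonneg)
  then show ?thesis
    by (rule has_sum_reindex_bij_witness[of RR "\<lambda>(j,(i,k)). (i,j,k)" "\<lambda>(i,j,k). (j,(i,k))", THEN iffD2, rotated -1])
       (auto simp: RR_def)
qed



definition fB :: "nat \<Rightarrow> nat \<times> nat \<times> nat \<Rightarrow> real" where
  "fB u = (\<lambda>(i,j,k). 1 / (Pn i ^ u * (Pn i - Qn j) * (Pn i - Pn k)))"
definition toeo :: "nat \<Rightarrow> nat \<times> nat \<times> nat \<Rightarrow> real" where
  "toeo u = (\<lambda>(i,j,k). 1 / (Pn i ^ u * Qn j * Pn k))"
definition Wt :: "nat \<Rightarrow> real" where "Wt i = (\<Sum>l<i. oh (Suc l) / Qn (Suc l))"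

lemma Wt_pairs: "(\<Sum>(j,k)\<in>{(j,k). k < j \<and> j \<le> i}. 1 / (Qn j * Pn k)) = Wt i"
proof -
  have "{(j,k). k < j \<and> j \<le> i} = Sigma {1..i} (\<lambda>j. {..<j})" by auto
  then have "(\<Sum>(j,k)\<in>{(j,k). k < j \<and> j \<le> i}. 1 / (Qn j * Pn k)) = (\<Sum>j\<in>{1..i}. \<Sum>k<j. 1 / (Qn j * Pn k))"
    by (simp add: sum.Sigma)
  also have "\<dots> = (\<Sum>j\<in>{1..i}. oh j / Qn j)"
    by (intro sum.cong refl) (simp add: oh_def Pn_def sum_divide_distrib mult.commute)
  also have "\<dots> = Wt i"
    unfolding Wt_def by (rule sum.reindex_bij_witness[of _ Suc "\<lambda>j. j - 1"]) auto
  finally show ?thesis .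
qed

lemma Wt_bound: "Wt i \<le> harm i ^ 2"
proof -
  have "Wt i \<le> (\<Sum>l<i. harm i * (1 / real (Suc l)))"
    unfolding Wt_def
  proof (intro sum_mono)
    fix l assume "l \<in> {..<i}"
    then have "oh (Suc l) \<le> harm i" using oh_mono[of "Suc l" i] oh_le_harm[of i] by auto
    moreover have "1 / Qn (Suc l) \<le> 1 / real (Suc l)" by (simp add: Qn_def frac_le)
    moreover have "0 \<le> 1 / Qn (Suc l)" by (simp add: Qn_def)
    ultimately have "oh (Suc l) * (1 / Qn (Suc l)) \<le> harm i * (1 / real (Suc l))"
      using harm_nonneg[of i] by (intro mult_mono) auto
    then show "oh (Suc l) / Qn (Suc l) \<le> harm i * (1 / real (Suc l))" by simp
  qed
  also have "\<dots> = harm i * (\<Sum>l<i. 1 / real (Suc l))" by (simp add: sum_distrib_left)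
  also have "\<dots> = harm i ^ 2" by (simp add: harm_altdef power2_eq_square inverse_eq_divide)
  finally show ?thesis .
qed

lemma Wt_nonneg: "0 \<le> Wt i"
  unfolding Wt_def by (intro sum_nonneg divide_nonneg_nonneg oh_nonneg) (simp add: Qn_def)

lemma Voeo_summable:
  assumes u: "u \<ge> 2"
  shows "(\<lambda>i. Wt i / Pn i ^ u) summable_on UNIV"
proof (rule summable_harm2[of 1])
  fix i
  show "0 \<le> Wt i / Pn i ^ u" using Wt_nonneg by (simp add: Pn_def)
  show "Wt i / Pn i ^ u \<le> 1 * (1 + harm i ^ 2) / (real i + 1)^2"
    using Wt_bound[of i] Pn_pow_ge[OF u, of i]
    by simp (rule frac_le, auto)
qed simp

lemma toeo_has_sum:
  assumes u: "u \<ge> 2"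
  shows "(toeo u has_sum (\<Sum>\<^sub>\<infinity>i. Wt i / Pn i ^ u)) RR"
proof -
  have "((\<lambda>(i,(j,k)). toeo u (i,j,k)) has_sum (\<Sum>\<^sub>\<infinity>i. Wt i / Pn i ^ u)) (Sigma UNIV (\<lambda>i. {(j,k). k < j \<and> j \<le> i}))"
  proof (rule has_sum_nonneg_Sigma)
    fix i
    have "(\<Sum>(j,k)\<in>{(j,k). k < j \<and> j \<le> i}. toeo u (i,j,k)) = (\<Sum>(j,k)\<in>{(j,k). k < j \<and> j \<le> i}. (1 / Pn i ^ u) * (1 / (Qn j * Pn k)))"
      by (intro sum.cong refl) (auto simp: toeo_def)
    also have "\<dots> = (1 / Pn i ^ u) * (\<Sum>(j,k)\<in>{(j,k). k < j \<and> j \<le> i}. 1 / (Qn j * Pn k))"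
      by (simp add: sum_distrib_left case_prod_unfold)
    also have "\<dots> = Wt i / Pn i ^ u" by (simp only: Wt_pairs) simp
    finally have e: "(\<Sum>(j,k)\<in>{(j,k). k < j \<and> j \<le> i}. toeo u (i,j,k)) = Wt i / Pn i ^ u" .
    have fin: "finite {(j,k). k < j \<and> j \<le> (i::nat)}"
      by (rule finite_subset[of _ "{..i} \<times> {..i}"]) auto
    show "((\<lambda>y. (\<lambda>(i,(j,k)). toeo u (i,j,k)) (i, y)) has_sum (Wt i / Pn i ^ u)) {(j,k). k < j \<and> j \<le> i}"
      by (rule has_sum_finiteI[OF fin]) (simp add: e[symmetric] case_prod_beta)
  next
    show "((\<lambda>i. Wt i / Pn i ^ u) has_sum (\<Sum>\<^sub>\<infinity>i. Wt i / Pn i ^ u)) UNIV"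
      using Voeo_summable[OF u] by (rule has_sum_infsum)
  qed (auto simp: toeo_def Pn_def Qn_def)
  then show ?thesis
    by (rule has_sum_reindex_bij_witness[of RR "\<lambda>(i,(j,k)). (i,j,k)" "\<lambda>(i,j,k). (i,(j,k))", THEN iffD2, rotated -1])
       (auto simp: RR_def)
qed

lemma fB_has_sum:
  assumes u: "u \<ge> 2"
  shows "(fB u has_sum (\<Sum>\<^sub>\<infinity>i. Wt i / Pn i ^ u)) RR"
proof -
  have "(toeo u has_sum (\<Sum>\<^sub>\<infinity>i. Wt i / Pn i ^ u)) RR" by (rule toeo_has_sum[OF u])
  then show ?thesis
  proof (rule has_sum_reindex_bij_witness[of RR "\<lambda>(i,j,k). (i, i-k, i-j)" "\<lambda>(i,j,k). (i, i-k, i-j)", THEN iffD2, rotated -1])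
    fix a assume "a \<in> RR"
    then obtain i j k where a: "a = (i,j,k)" "k < j" "j \<le> i" by (auto simp: RR_def)
    have e1: "Qn (i - k) = Pn i - Pn k" using a by (simp add: Qn_def Pn_def of_nat_diff)
    have e2: "Pn (i - j) = Pn i - Qn j" using a by (simp add: Qn_def Pn_def of_nat_diff)
    show "toeo u ((\<lambda>(i,j,k). (i, i-k, i-j)) a) = fB u a"
      using a by (simp add: toeo_def fB_def e1 e2 mult.assoc)
  qed (auto simp: RR_def)
qed



definition fA1 :: "nat \<Rightarrow> nat \<times> nat \<times> nat \<Rightarrow> real" where
  "fA1 u = (\<lambda>(i,j,k). 1 / (Pn k ^ (u-1) * Pn i * (Pn i - Pn k) * (Qn j - Pn k)))"

definition Xf :: "nat \<times> nat \<Rightarrow> real" where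
  "Xf = (\<lambda>(m,n). 1 / (2*real m+1) * (1 / (2*real m+2*real n+2) - 1 / (2*real m+2*real n+3)))"
definition Yf :: "nat \<Rightarrow> nat \<times> nat \<Rightarrow> real" where
  "Yf k = (\<lambda>(m,n). 1 / (2*real m+1) * (1 / (2*real m+2*real n+3) - 1 / (2*real m+2*real n+2*real k+3)))"

lemma Xf_has_sum: "(Xf has_sum (pi^2/24)) (UNIV \<times> UNIV)"
proof -
  define h where "h = (\<lambda>(N::nat,m::nat). 1 / (2*real m+1) * (1/(2*real N) - 1/(2*real N+1)))"
  have inner: "((\<lambda>m. h (N, m)) has_sum (oh N * (1/(2*real N) - 1/(2*real N+1)))) {..<N}" for N
  proof (rule has_sum_finiteI)
    show "oh N * (1/(2*real N) - 1/(2*real N+1)) = (\<Sum>m<N. h (N, m))"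
      by (simp add: h_def oh_def sum_distrib_right)
  qed simp
  have nn: "0 \<le> h (N, m)" if "m \<in> {..<N}" for N m
  proof -
    have "1/(2*real N+1) \<le> 1/(2*real N)" using that by (intro divide_left_mono) auto
    then show ?thesis by (simp add: h_def)
  qed
  have "(h has_sum (pi^2/24)) (Sigma UNIV (\<lambda>N. {..<N}))"
    by (rule has_sum_nonneg_Sigma[OF inner C_has_sum nn])
  then show ?thesis
  proof (rule has_sum_reindex_bij_witness[of "UNIV \<times> UNIV" "\<lambda>(N,m). (m, N-m-1)" "\<lambda>(m,n). (m+n+1, m)", THEN iffD2, rotated -1])
    fix a :: "nat \<times> nat"
    obtain m n where a: "a = (m,n)" by (cases a)
    show "h ((\<lambda>(m,n). (m+n+1, m)) a) = Xf a"
      by (simp add: a Xf_def h_def algebra_simps)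
  qed auto
qed

lemma E_has_sum': "((\<lambda>m. 1 / (2*real m+1) * (1 / (2*real m+2*real l+3))) has_sum (oh (Suc l) / Qn (Suc l))) UNIV"
proof -
  have eqf: "(\<lambda>n. 1 / ((2*real n+1) * (2*real n+2*real (Suc l)+1))) = (\<lambda>m. 1 / (2*real m+1) * (1 / (2*real m+2*real l+3)))"
    by (auto simp: fun_eq_iff algebra_simps)
  have "((\<lambda>n. 1 / ((2*real n+1) * (2*real n+2*real (Suc l)+1))) has_sum (oh (Suc l) / (2*real (Suc l)))) UNIV"
    by (rule E_has_sum) simp
  then have "((\<lambda>m. 1 / (2*real m+1) * (1 / (2*real m+2*real l+3))) has_sum (oh (Suc l) / (2*real (Suc l)))) UNIV"
    by (simp only: eqf)
  moreover have q: "oh (Suc l) / Qn (Suc l) = oh (Suc l) / (2*real (Suc l))" by (simp only: Qn_def)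
  ultimately show ?thesis unfolding q by blast
qed

lemma Yf_has_sum: "(Yf k has_sum Wt k) (UNIV \<times> UNIV)"
proof -
  define g where "g m = 1 / (2*real m+1) * (\<Sum>l<k. 1 / (2*real m+2*real l+3))" for m
  have inner: "((\<lambda>n. Yf k (m, n)) has_sum g m) UNIV" for m
  proof -
    have "(\<lambda>n. Yf k (m, n)) = (\<lambda>n. 1 / (2*real m+1) * (1 / (2*real m+2*real n+3) - 1 / (2*real m+2*real n+2*real k+3)))"
      by (simp add: Yf_def)
    then show ?thesis unfolding g_def by (simp only:) (rule has_sum_cmult_right[OF Y_has_sum])
  qed
  have "((\<lambda>m. \<Sum>l<k. 1 / (2*real m+1) * (1 / (2*real m+2*real l+3))) has_sum (\<Sum>l<k. oh (Suc l) / Qn (Suc l))) UNIV"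
  proof (rule has_sum_sum_fin)
    fix l show "((\<lambda>m. 1 / (2*real m+1) * (1 / (2*real m+2*real l+3))) has_sum (oh (Suc l) / Qn (Suc l))) UNIV"
      by (rule E_has_sum')
  qed simp
  moreover have "(\<Sum>l<k. 1 / (2*real m+1) * (1 / (2*real m+2*real l+3))) = g m" for m
    by (simp add: g_def sum_distrib_left)
  ultimately have outer: "(g has_sum Wt k) UNIV" by (simp add: Wt_def)
  have nn: "0 \<le> Yf k (m, n)" for m n
  proof -
    have "1 / (2*real m+2*real n+2*real k+3) \<le> 1 / (2*real m+2*real n+3)" by (intro divide_left_mono) auto
    then show ?thesis by (simp add: Yf_def)
  qed
  have "(Yf k has_sum Wt k) (Sigma UNIV (\<lambda>_. UNIV))"
    by (rule has_sum_nonneg_Sigma[OF inner outer nn])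
  then show ?thesis by simp
qed

lemma fA1_slice_eq:
  assumes u: "u \<ge> 1"
  shows "fA1 u (k+1+m+n, k+1+m, k) = (1 / Pn k ^ u) * (Xf (m,n) + Yf k (m,n))"
proof -
  define r where "r = Pn k"
  define s where "s = 2*real m+2*real n+2"
  define t where "t = 2*real m+1"
  define R where "R = r ^ (u-1)"
  have r: "r > 0" and s: "s > 0" and t: "t > 0" and R: "R > 0" by (auto simp: r_def s_def t_def R_def Pn_def)
  have ru: "r ^ u = R * r" using u by (simp add: R_def power_eq_if[of _ u])
  have e1: "Pn (k+1+m+n) = r + s" by (simp add: r_def s_def Pn_def algebra_simps)
  have e1': "Pn (k+1+m+n) - Pn k = s" by (simp add: s_def Pn_def algebra_simps)
  have e2: "Qn (k+1+m) - Pn k = t" by (simp add: t_def Qn_def Pn_def algebra_simps)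
  have e3: "2*real m+2*real n+3 = s + 1" "2*real m+2*real n+2*real k+3 = s + r"
    by (simp_all add: s_def r_def Pn_def algebra_simps)
  have "fA1 u (k+1+m+n, k+1+m, k) = 1 / (Pn k ^ (u-1) * Pn (k+1+m+n) * (Pn (k+1+m+n) - Pn k) * (Qn (k+1+m) - Pn k))"
    by (simp only: fA1_def prod.case)
  also have "\<dots> = 1 / (R * (r + s) * s * t)"
    apply (simp only: e1' e2)
    apply (simp only: e1)
    apply (simp add: R_def r_def)
    done
  also have "\<dots> = (1 / (R * r)) * (1 / t * (1 / s - 1 / (s + 1)) + 1 / t * (1 / (s + 1) - 1 / (s + r)))"
  proof -
    have "1 / t * (1 / s - 1 / (s + 1)) + 1 / t * (1 / (s + 1) - 1 / (s + r)) = 1 / t * (1 / s - 1 / (s + r))"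
      by (simp add: algebra_simps)
    also have "1 / s - 1 / (s + r) = r / (s * (s + r))" using r s by (simp add: field_simps)
    finally show ?thesis using r s t R by (simp add: field_simps)
  qed
  also have "\<dots> = (1 / Pn k ^ u) * (Xf (m,n) + Yf k (m,n))"
    by (simp add: Xf_def Yf_def e3 ru[symmetric] r_def[symmetric] t_def s_def)
  finally show ?thesis .
qed

lemma Zu_summable:
  assumes u: "u \<ge> 2"
  shows "(\<lambda>k. 1 / Pn k ^ u) summable_on UNIV"
proof (rule summable_harm2[of 1])
  fix k
  show "0 \<le> 1 / Pn k ^ u" by (simp add: Pn_def)
  show "1 / Pn k ^ u \<le> 1 * (1 + harm k ^ 2) / (real k + 1)^2"
    using Pn_pow_ge[OF u, of k] by simp (rule frac_le, auto)
qed simp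

lemma fA1_has_sum:
  assumes u: "u \<ge> 2"
  shows "(fA1 u has_sum (pi^2/24 * (\<Sum>\<^sub>\<infinity>k. 1 / Pn k ^ u) + (\<Sum>\<^sub>\<infinity>i. Wt i / Pn i ^ u))) RR"
proof -
  define h where "h = (\<lambda>(k::nat, x::nat\<times>nat). (1 / Pn k ^ u) * (Xf x + Yf k x))"
  have slice: "((\<lambda>x. h (k, x)) has_sum ((1 / Pn k ^ u) * (pi^2/24 + Wt k))) (UNIV \<times> UNIV)" for k
  proof -
    have "((\<lambda>x. Xf x + Yf k x) has_sum (pi^2/24 + Wt k)) (UNIV \<times> UNIV)"
      by (rule has_sum_add[OF Xf_has_sum Yf_has_sum])
    then show ?thesis unfolding h_def prod.case by (rule has_sum_cmult_right)
  qed
  have outer: "((\<lambda>k. (1 / Pn k ^ u) * (pi^2/24 + Wt k)) has_sum (pi^2/24 * (\<Sum>\<^sub>\<infinity>k. 1 / Pn k ^ u) + (\<Sum>\<^sub>\<infinity>i. Wt i / Pn i ^ u))) UNIV"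
  proof -
    have a: "((\<lambda>k. pi^2/24 * (1 / Pn k ^ u)) has_sum (pi^2/24 * (\<Sum>\<^sub>\<infinity>k. 1 / Pn k ^ u))) UNIV"
      by (rule has_sum_cmult_right) (rule has_sum_infsum[OF Zu_summable[OF u]])
    have b: "((\<lambda>i. Wt i / Pn i ^ u) has_sum (\<Sum>\<^sub>\<infinity>i. Wt i / Pn i ^ u)) UNIV"
      by (rule has_sum_infsum[OF Voeo_summable[OF u]])
    show ?thesis using has_sum_add[OF a b] by (simp add: algebra_simps)
  qed
  have nn: "0 \<le> h (k, y)" for k y
  proof -
    obtain m n where y: "y = (m,n)" by (cases y)
    have "0 \<le> fA1 u (k+1+m+n, k+1+m, k)" by (auto simp: fA1_def Pn_def Qn_def intro!: mult_nonneg_nonneg)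
    then show ?thesis using fA1_slice_eq[of u k m n] u by (simp add: y h_def)
  qed
  have "(h has_sum (pi^2/24 * (\<Sum>\<^sub>\<infinity>k. 1 / Pn k ^ u) + (\<Sum>\<^sub>\<infinity>i. Wt i / Pn i ^ u))) (Sigma UNIV (\<lambda>_. UNIV \<times> UNIV))"
    by (rule has_sum_nonneg_Sigma[OF slice outer nn])
  then show ?thesis
  proof (rule has_sum_reindex_bij_witness[of RR "\<lambda>(k,(m,n)). (k+1+m+n, k+1+m, k)" "\<lambda>(i,j,k). (k, (j-k-1, i-j))", THEN iffD2, rotated -1])
    fix a assume "a \<in> RR"
    then obtain i j k where a: "a = (i,j,k)" "k < j" "j \<le> i" by (auto simp: RR_def)
    have "fA1 u (k+1+(j-k-1)+(i-j), k+1+(j-k-1), k) = (1 / Pn k ^ u) * (Xf (j-k-1,i-j) + Yf k (j-k-1,i-j))"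
      using u by (intro fA1_slice_eq) simp
    moreover have "k+1+(j-k-1)+(i-j) = i" "k+1+(j-k-1) = j" using a by auto
    ultimately show "h ((\<lambda>(i,j,k). (k, (j-k-1, i-j))) a) = fA1 u a"
      using a by (simp add: h_def)
  qed (auto simp: RR_def)
qed



lemma geo_sum:
  fixes x y :: real
  assumes "m \<le> n"
  shows "(x - y) * (\<Sum>a\<in>{m..<n}. x^a * y^(n-a)) = x^n * y - x^m * y^(n-m+1)"
  using assms
proof (induction n)
  case 0 then show ?case by simp
next
  case (Suc n)
  show ?case
  proof (cases "m = Suc n")
    case True then show ?thesis by simp
  next
    case False
    then have mn: "m \<le> n" using Suc.prems by simp
    have "(\<Sum>a\<in>{m..<Suc n}. x^a * y^(Suc n - a)) = y * (\<Sum>a\<in>{m..<n}. x^a * y^(n-a)) + x^n * y"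
    proof -
      have "(\<Sum>a\<in>{m..<Suc n}. x^a * y^(Suc n - a)) = (\<Sum>a\<in>{m..<n}. x^a * y^(Suc n - a)) + x^n * y"
        using mn by (simp add: sum.atLeastLessThan_Suc)
      also have "(\<Sum>a\<in>{m..<n}. x^a * y^(Suc n - a)) = y * (\<Sum>a\<in>{m..<n}. x^a * y^(n-a))"
        by (simp add: sum_distrib_left Suc_diff_le algebra_simps)
      finally show ?thesis .
    qed
    then have "(x - y) * (\<Sum>a\<in>{m..<Suc n}. x^a * y^(Suc n - a)) = y * ((x - y) * (\<Sum>a\<in>{m..<n}. x^a * y^(n-a))) + (x - y) * x^n * y"
      by (simp add: algebra_simps)
    also have "\<dots> = y * (x^n * y - x^m * y^(n-m+1)) + (x - y) * x^n * y"
      using Suc.IH[OF mn] by simp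
    also have "\<dots> = x^(Suc n) * y - x^m * y^(Suc n - m + 1)"
      using mn by (simp add: algebra_simps Suc_diff_le)
    finally show ?thesis .
  qed
qed

lemma Sw_nested:
  fixes f :: "nat \<Rightarrow> nat \<Rightarrow> nat \<Rightarrow> real"
  shows "(\<Sum>(a,b,c)\<in>{(a,b,c). a+b+c = w \<and> a \<ge> 2 \<and> b \<ge> 1 \<and> c \<ge> 1}. f a b c)
       = (\<Sum>a\<in>{2..<w}. \<Sum>b\<in>{1..<w-a}. f a b (w-a-b))"
proof -
  have S: "{(a,b,c). a+b+c = w \<and> a \<ge> 2 \<and> b \<ge> 1 \<and> c \<ge> 1} = (\<lambda>(a,b). (a,b,w-a-b)) ` (SIGMA a:{2..<w}. {1..<w-a})"
    by (auto simp: image_iff)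
  have inj: "inj_on (\<lambda>(a,b). (a,b,w-a-b)) (SIGMA a:{2..<w}. {1..<w-a})"
    by (auto simp: inj_on_def)
  have "(\<Sum>(a,b,c)\<in>{(a,b,c). a+b+c = w \<and> a \<ge> 2 \<and> b \<ge> 1 \<and> c \<ge> 1}. f a b c)
      = (\<Sum>(a,b)\<in>(SIGMA a:{2..<w}. {1..<w-a}). f a b (w-a-b))"
    unfolding S by (subst sum.reindex[OF inj]) (simp add: case_prod_unfold)
  also have "\<dots> = (\<Sum>a\<in>{2..<w}. \<Sum>b\<in>{1..<w-a}. f a b (w-a-b))"
    by (rule sum.Sigma[symmetric]) auto
  finally show ?thesis .
qed

lemma F_closed:
  fixes p q r :: real
  assumes pq: "q < p" and qr: "r < q" and r0: "0 < r"
  shows "(\<Sum>(a,b,c)\<in>{(a,b,c). a+b+c = n+3 \<and> a \<ge> 2 \<and> b \<ge> 1 \<and> c \<ge> 1}. 1 / (p^a * q^b * r^c))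
       = 1 / (r^n * p * (p-r) * (q-r)) + 1 / (p^(n+1) * (p-q) * (p-r)) - 1 / (q^n * p * (p-q) * (q-r))"
proof -
  define w where "w = n + 3"
  define x where "x = 1 / p"
  define y where "y = 1 / q"
  define z where "z = 1 / r"
  have p0: "p > 0" and q0: "q > 0" using assms by auto
  have xy: "x \<noteq> y" and xz: "x \<noteq> z" and yz: "y \<noteq> z"
    using assms by (auto simp: x_def y_def z_def field_simps)
  have t: "1 / (p^a * q^b * r^c) = x^a * y^b * z^c" for a b c
    by (simp add: x_def y_def z_def power_one_over)
  have "(\<Sum>(a,b,c)\<in>{(a,b,c). a+b+c = w \<and> a \<ge> 2 \<and> b \<ge> 1 \<and> c \<ge> 1}. 1 / (p^a * q^b * r^c))
      = (\<Sum>a\<in>{2..<w}. \<Sum>b\<in>{1..<w-a}. x^a * y^b * z^(w-a-b))"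
    by (simp only: Sw_nested t)
  also have "\<dots> = (\<Sum>a\<in>{2..<w}. x^a * ((y^(w-a) * z - y * z^(w-a)) / (y - z)))"
  proof (intro sum.cong refl)
    fix a assume a: "a \<in> {2..<w}"
    have "(y - z) * (\<Sum>b\<in>{1..<w-a}. y^b * z^(w-a-b)) = y^(w-a) * z - y^1 * z^(w-a-1+1)"
      by (rule geo_sum) (use a in auto)
    also have "w-a-1+1 = w-a" using a by (simp add: Suc_diff_Suc)
    finally have "(\<Sum>b\<in>{1..<w-a}. y^b * z^(w-a-b)) = (y^(w-a) * z - y * z^(w-a)) / (y - z)"
      using yz by (simp add: field_simps)
    then show "(\<Sum>b\<in>{1..<w-a}. x^a * y^b * z^(w-a-b)) = x^a * ((y^(w-a) * z - y * z^(w-a)) / (y - z))"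
      by (simp add: sum_distrib_left[symmetric] mult.assoc)
  qed
  also have "\<dots> = (z * (\<Sum>a\<in>{2..<w}. x^a * y^(w-a)) - y * (\<Sum>a\<in>{2..<w}. x^a * z^(w-a))) / (y - z)"
    by (simp add: sum_divide_distrib sum_distrib_left sum_subtractf[symmetric] algebra_simps diff_divide_distrib)
  also have "(\<Sum>a\<in>{2..<w}. x^a * y^(w-a)) = (x^w * y - x^2 * y^(w-1)) / (x - y)"
    using geo_sum[of 2 w x y] xy by (simp add: w_def field_simps)
  also have "(\<Sum>a\<in>{2..<w}. x^a * z^(w-a)) = (x^w * z - x^2 * z^(w-1)) / (x - z)"
    using geo_sum[of 2 w x z] xz by (simp add: w_def field_simps)
  finally have F: "(\<Sum>(a,b,c)\<in>{(a,b,c). a+b+c = w \<and> a \<ge> 2 \<and> b \<ge> 1 \<and> c \<ge> 1}. 1 / (p^a * q^b * r^c))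
     = (z * ((x^w * y - x^2 * y^(w-1)) / (x - y)) - y * ((x^w * z - x^2 * z^(w-1)) / (x - z))) / (y - z)" .
  have w1: "w - 1 = n + 2" by (simp add: w_def)
  define P where "P = p^n"
  define Q where "Q = q^n"
  define R where "R = r^n"
  have P0: "P > 0" "Q > 0" "R > 0" using p0 q0 r0 by (auto simp: P_def Q_def R_def)
  have ex: "x^w = 1 / (P * p^3)" "y^(w-1) = 1 / (Q * q^2)" "z^(w-1) = 1 / (R * r^2)"
    by (simp_all add: w1 w_def x_def y_def z_def P_def Q_def R_def power_one_over power_add power2_eq_square)
  have rhs: "1 / (r^n * p * (p-r) * (q-r)) + 1 / (p^(n+1) * (p-q) * (p-r)) - 1 / (q^n * p * (p-q) * (q-r))
     = 1 / (R * p * (p-r) * (q-r)) + 1 / (P * p * (p-q) * (p-r)) - 1 / (Q * p * (p-q) * (q-r))"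
    by (simp add: P_def Q_def R_def mult.commute)
  have d: "p - q \<noteq> 0" "p - r \<noteq> 0" "q - r \<noteq> 0" using assms by auto
  have d': "q - p \<noteq> 0" "r - p \<noteq> 0" "r - q \<noteq> 0" using assms by auto
  have pn: "p \<noteq> 0" "q \<noteq> 0" "r \<noteq> 0" "P \<noteq> 0" "Q \<noteq> 0" "R \<noteq> 0" using p0 q0 r0 P0 by auto
  define d1 where "d1 = p - q"
  define d2 where "d2 = p - r"
  define d3 where "d3 = q - r"
  have e: "q - p = - d1" "r - p = - d2" "r - q = - d3" "p - q = d1" "p - r = d2" "q - r = d3"
    by (simp_all add: d1_def d2_def d3_def)
  have dn: "d1 \<noteq> 0" "d2 \<noteq> 0" "d3 \<noteq> 0" using d by (simp_all add: d1_def d2_def d3_def)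
  have exy: "x - y = - d1 / (p*q)" "x - z = - d2 / (p*r)" "y - z = - d3 / (q*r)"
    using pn by (simp_all add: x_def y_def z_def d1_def d2_def d3_def field_simps)
  have FG: "(z * ((x^w * y - x^2 * y^(w-1)) / (x - y)) - y * ((x^w * z - x^2 * z^(w-1)) / (x - z))) / (y - z)
     = ((Q*q - P*p) / (P*Q*p^2*(-d1)) - (R*r - P*p) / (P*R*p^2*(-d2))) / (-d3)"
    unfolding ex exy unfolding x_def y_def z_def
    using pn dn by (simp add: field_simps power2_eq_square power3_eq_cube)
  have GR: "((Q*q - P*p) / (P*Q*p^2*(-d1)) - (R*r - P*p) / (P*R*p^2*(-d2))) / (-d3)
     = 1 / (R * p * d2 * d3) + 1 / (P * p * d1 * d2) - 1 / (Q * p * d1 * d3)"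
  proof -
    have "((Q*q - P*p) / (P*Q*p^2*(-d1)) - (R*r - P*p) / (P*R*p^2*(-d2))) / (-d3)
      - (1 / (R * p * d2 * d3) + 1 / (P * p * d1 * d2) - 1 / (Q * p * d1 * d3))
      = (d2 * R * (Q*q - P*p) - d1 * Q * (R*r - P*p) - P*Q*p*d1 - Q*R*p*d3 + P*R*p*d2)
          / (P * Q * R * p^2 * d1 * d2 * d3)"
      using pn dn by (simp add: field_simps power2_eq_square)
    also have "d2 * R * (Q*q - P*p) - d1 * Q * (R*r - P*p) - P*Q*p*d1 - Q*R*p*d3 + P*R*p*d2 = 0"
      unfolding d1_def d2_def d3_def by (simp add: algebra_simps)
    finally show ?thesis by simp
  qed
  have rhs2: "1 / (R * p * (p-r) * (q-r)) + 1 / (P * p * (p-q) * (p-r)) - 1 / (Q * p * (p-q) * (q-r))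
      = 1 / (R * p * d2 * d3) + 1 / (P * p * d1 * d2) - 1 / (Q * p * d1 * d3)"
    by (simp only: e)
  show ?thesis
    unfolding w_def[symmetric] F rhs FG GR rhs2 ..
qed



definition Sw :: "nat \<Rightarrow> (nat \<times> nat \<times> nat) set" where
  "Sw w = {(a,b,c). a+b+c = w \<and> a \<ge> 2 \<and> b \<ge> 1 \<and> c \<ge> 1}"

definition tm :: "nat \<times> nat \<times> nat \<Rightarrow> nat \<times> nat \<times> nat \<Rightarrow> real" where
  "tm = (\<lambda>(a,b,c) (i,j,k). 1 / (Pn i ^ a * Qn j ^ b * Pn k ^ c))"

lemma Sw_finite: "finite (Sw w)"
  by (rule finite_subset[of _ "{..w} \<times> {..w} \<times> {..w}"]) (auto simp: Sw_def)

lemma G_eq: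
  assumes u: "u \<ge> 2" and x: "x \<in> RR"
  shows "(\<Sum>abc\<in>Sw (u+2). tm abc x) = fA1 u x + fB u x - fA4 u x"
proof -
  obtain i j k where xe: "x = (i,j,k)" and kj: "k < j" and ji: "j \<le> i" using x by (auto simp: RR_def)
  have pq: "Qn j < Pn i" and qr: "Pn k < Qn j" and r0: "0 < Pn k"
    using kj ji by (auto simp: Pn_def Qn_def)
  have un: "u - 1 + 3 = u + 2" "u - 1 + 1 = u" using u by auto
  have "(\<Sum>(a,b,c)\<in>{(a,b,c). a+b+c = (u-1)+3 \<and> a \<ge> 2 \<and> b \<ge> 1 \<and> c \<ge> 1}. 1 / (Pn i^a * Qn j^b * Pn k^c))
       = 1 / (Pn k^(u-1) * Pn i * (Pn i - Pn k) * (Qn j - Pn k)) + 1 / (Pn i^(u-1+1) * (Pn i - Qn j) * (Pn i - Pn k))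
         - 1 / (Qn j^(u-1) * Pn i * (Pn i - Qn j) * (Qn j - Pn k))"
    by (rule F_closed[OF pq qr r0])
  then show ?thesis
    unfolding un by (simp add: xe Sw_def tm_def fA1_def fB_def fA4_def case_prod_unfold)
qed

lemma G_has_sum:
  assumes u: "u \<ge> 2"
  shows "((\<lambda>x. \<Sum>abc\<in>Sw (u+2). tm abc x) has_sum
     ((pi^2/24 * (\<Sum>\<^sub>\<infinity>k. 1 / Pn k ^ u) + (\<Sum>\<^sub>\<infinity>i. Wt i / Pn i ^ u)) + (\<Sum>\<^sub>\<infinity>i. Wt i / Pn i ^ u)
       - (\<Sum>\<^sub>\<infinity>j. oh j ^ 2 / Qn j ^ u))) RR"
proof -
  have "((\<lambda>x. fA1 u x + fB u x - fA4 u x) has_sum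
     ((pi^2/24 * (\<Sum>\<^sub>\<infinity>k. 1 / Pn k ^ u) + (\<Sum>\<^sub>\<infinity>i. Wt i / Pn i ^ u)) + (\<Sum>\<^sub>\<infinity>i. Wt i / Pn i ^ u)
       - (\<Sum>\<^sub>\<infinity>j. oh j ^ 2 / Qn j ^ u))) RR"
    by (intro has_sum_diff has_sum_add fA1_has_sum fB_has_sum A4_total u)
  moreover have "((\<lambda>x. \<Sum>abc\<in>Sw (u+2). tm abc x) has_sum V) RR \<longleftrightarrow> ((\<lambda>x. fA1 u x + fB u x - fA4 u x) has_sum V) RR" for V
    by (rule has_sum_cong) (rule G_eq[OF u])
  ultimately show ?thesis by blast
qed

lemma tm_nonneg: "x \<in> RR \<Longrightarrow> 0 \<le> tm abc x"
  by (auto simp: tm_def RR_def Pn_def Qn_def case_prod_unfold)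

lemma main_sum:
  assumes u: "u \<ge> 2"
  shows "(\<Sum>abc\<in>Sw (u+2). \<Sum>\<^sub>\<infinity>x\<in>RR. tm abc x) =
     (pi^2/24 * (\<Sum>\<^sub>\<infinity>k. 1 / Pn k ^ u) + (\<Sum>\<^sub>\<infinity>i. Wt i / Pn i ^ u)) + (\<Sum>\<^sub>\<infinity>i. Wt i / Pn i ^ u)
       - (\<Sum>\<^sub>\<infinity>j. oh j ^ 2 / Qn j ^ u)"
proof -
  have Gs: "(\<lambda>x. \<Sum>abc\<in>Sw (u+2). tm abc x) summable_on RR"
    using G_has_sum[OF u] by (auto simp: summable_on_def)
  have summ: "tm abc summable_on RR" if "abc \<in> Sw (u+2)" for abc
  proof (rule summable_on_comparison_test[OF Gs])
    fix x assume x: "x \<in> RR"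
    show "tm abc x \<le> (\<Sum>abc\<in>Sw (u+2). tm abc x)"
      by (rule member_le_sum[OF that]) (auto intro: tm_nonneg[OF x] Sw_finite)
    show "0 \<le> tm abc x" by (rule tm_nonneg[OF x])
  qed
  have "((\<lambda>x. \<Sum>abc\<in>Sw (u+2). tm abc x) has_sum (\<Sum>abc\<in>Sw (u+2). \<Sum>\<^sub>\<infinity>x\<in>RR. tm abc x)) RR"
  proof (rule has_sum_sum_fin[OF Sw_finite])
    fix abc assume "abc \<in> Sw (u+2)"
    then show "(tm abc has_sum (\<Sum>\<^sub>\<infinity>x\<in>RR. tm abc x)) RR" by (rule has_sum_infsum[OF summ])
  qed
  from has_sum_unique[OF this G_has_sum[OF u]] show ?thesis .
qed



lemma all_less_3: "(\<forall>j<(3::nat). P j) \<longleftrightarrow> P 0 \<and> P 1 \<and> P 2"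
  unfolding numeral_3_eq_3 numeral_2_eq_2 by (auto simp: less_Suc_eq)
lemma all_less_2: "(\<forall>j<(2::nat). P j) \<longleftrightarrow> P 0 \<and> P 1"
  unfolding numeral_2_eq_2 by (auto simp: less_Suc_eq)

lemma odd_half: "odd (A::nat) \<Longrightarrow> 2 * ((A - 1) div 2) + 1 = A" by (auto elim!: oddE)
lemma even_half: "even (B::nat) \<Longrightarrow> 2 * (B div 2) = B" by auto
lemma odd_even_lt: "odd (A::nat) \<Longrightarrow> even B \<Longrightarrow> B < A \<Longrightarrow> B div 2 \<le> (A - 1) div 2"
  by (auto elim!: oddE evenE)
lemma even_odd_lt: "even (B::nat) \<Longrightarrow> odd C \<Longrightarrow> C < B \<Longrightarrow> (C - 1) div 2 < B div 2"
  by (auto elim!: oddE evenE)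
lemma odd_odd_lt: "odd (A::nat) \<Longrightarrow> odd C \<Longrightarrow> C < A \<Longrightarrow> (C - 1) div 2 < (A - 1) div 2"
  by (auto elim!: oddE)
lemma even_even_lt: "even (A::nat) \<Longrightarrow> even C \<Longrightarrow> C < A \<Longrightarrow> C div 2 < A div 2"
  by (auto elim!: evenE)
lemma all_less_1: "(\<forall>j<(1::nat). P j) \<longleftrightarrow> P 0"
  by auto

lemma list3_infsum:
  fixes f :: "nat list \<Rightarrow> real"
  shows "infsum f {m. length m = 3 \<and> P m} = infsum (\<lambda>(a,b,c). f [a,b,c]) {(a,b,c). P [a,b,c]}"
proof (rule infsum_reindex_bij_witness[of _ "\<lambda>(a,b,c). [a,b,c]" "\<lambda>m. (m!0, m!1, m!2)"])
  fix m assume m: "m \<in> {m. length m = 3 \<and> P m}"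
  then obtain a b c where "m = [a,b,c]"
    by (auto simp: numeral_3_eq_3 length_Suc_conv)
  then show "(\<lambda>(a,b,c). [a,b,c]) (m!0, m!1, m!2) = m" by simp
  show "(m!0, m!1, m!2) \<in> {(a,b,c). P [a,b,c]}" using m \<open>m = [a,b,c]\<close> by simp
  show "(\<lambda>(a,b,c). f [a,b,c]) (m!0, m!1, m!2) = f m" using \<open>m = [a,b,c]\<close> by simp
qed auto

lemma list2_infsum:
  fixes f :: "nat list \<Rightarrow> real"
  shows "infsum f {m. length m = 2 \<and> P m} = infsum (\<lambda>(a,b). f [a,b]) {(a,b). P [a,b]}"
proof (rule infsum_reindex_bij_witness[of _ "\<lambda>(a,b). [a,b]" "\<lambda>m. (m!0, m!1)"])
  fix m assume m: "m \<in> {m. length m = 2 \<and> P m}"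
  then obtain a b where "m = [a,b]"
    by (auto simp: numeral_2_eq_2 length_Suc_conv)
  then show "(\<lambda>(a,b). [a,b]) (m!0, m!1) = m" by simp
  show "(m!0, m!1) \<in> {(a,b). P [a,b]}" using m \<open>m = [a,b]\<close> by simp
  show "(\<lambda>(a,b). f [a,b]) (m!0, m!1) = f m" using \<open>m = [a,b]\<close> by simp
qed auto

lemma list1_infsum:
  fixes f :: "nat list \<Rightarrow> real"
  shows "infsum f {m. length m = 1 \<and> P m} = infsum (\<lambda>a. f [a]) {a. P [a]}"
proof (rule infsum_reindex_bij_witness[of _ "\<lambda>a. [a]" "\<lambda>m. m!0"])
  fix m assume m: "m \<in> {m. length m = 1 \<and> P m}"
  then obtain a where "m = [a]"
    by (auto simp: length_Suc_conv)
  then show "[m!0] = m" by simp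
  show "m!0 \<in> {a. P [a]}" using m \<open>m = [a]\<close> by simp
  show "f [m!0] = f m" using \<open>m = [a]\<close> by simp
qed auto

lemma L3_set: "{(A,B,C). sorted_wrt (>) [A,B,C] \<and> (\<forall>j<3. 0 < [A,B,C] ! j \<and> [A,B,C] ! j mod 2 = (3 - j) mod 2)}
    = {(A,B,C). C < B \<and> B < A \<and> 0 < C \<and> odd A \<and> even B \<and> odd C}"
  unfolding all_less_3 by (auto simp: odd_iff_mod_2_eq_one even_iff_mod_2_eq_zero)

lemma prod3: "(\<Prod>j<(3::nat). f j) = f 0 * f 1 * (f 2 :: real)"
proof -
  have e: "{..<3::nat} = {0,1,2}" by auto
  show ?thesis unfolding e by (simp add: mult.assoc)
qed

lemma Tval3: "Tval [a,b,c] = 8 * infsum (tm (a,b,c)) RR"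
proof -
  have len: "length [a,b,c] = 3" by simp
  have "Tval [a,b,c] = infsum (\<lambda>m. 2^3 / (\<Prod>j<3. real (m!j) ^ ([a,b,c]!j)))
      {m. length m = 3 \<and> (sorted_wrt (>) m \<and> (\<forall>j<3. 0 < m!j \<and> m!j mod 2 = (3-j) mod 2))}"
    unfolding Tval_def len by simp
  also have "\<dots> = infsum (\<lambda>(A,B,C). 2^3 / (\<Prod>j<3. real ([A,B,C]!j) ^ ([a,b,c]!j)))
      {(A,B,C). sorted_wrt (>) [A,B,C] \<and> (\<forall>j<3. 0 < [A,B,C]!j \<and> [A,B,C]!j mod 2 = (3-j) mod 2)}"
    by (rule list3_infsum)
  also have "\<dots> = infsum (\<lambda>(A,B,C). 8 / (real A ^ a * real B ^ b * real C ^ c))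
      {(A,B,C). C < B \<and> B < A \<and> 0 < C \<and> odd A \<and> even B \<and> odd C}"
    unfolding L3_set prod3 by simp
  also have "\<dots> = infsum (\<lambda>x. 8 * tm (a,b,c) x) RR"
  proof (rule infsum_reindex_bij_witness[of _ "\<lambda>(i,j,k). (2*i+1, 2*j, 2*k+1)" "\<lambda>(A,B,C). ((A-1) div 2, B div 2, (C-1) div 2)"])
    fix y :: "nat \<times> nat \<times> nat"
    assume y: "y \<in> {(A,B,C). C < B \<and> B < A \<and> 0 < C \<and> odd A \<and> even B \<and> odd C}"
    then obtain A B C where e: "y = (A,B,C)" and h: "C < B" "B < A" "0 < C" "odd A" "even B" "odd C" by auto
    show "(\<lambda>(i,j,k). (2*i+1, 2*j, 2*k+1)) ((\<lambda>(A,B,C). ((A-1) div 2, B div 2, (C-1) div 2)) y) = y"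
      using h by (simp add: e odd_half even_half)
    show "(\<lambda>(A,B,C). ((A-1) div 2, B div 2, (C-1) div 2)) y \<in> RR"
      using h odd_even_lt[of A B] even_odd_lt[of B C] by (simp add: e RR_def)
    have r: "Pn ((A - 1) div 2) = real A" "Qn (B div 2) = real B" "Pn ((C - 1) div 2) = real C"
      using odd_half[OF h(4)] even_half[OF h(5)] odd_half[OF h(6)] unfolding Pn_def Qn_def
      by (metis of_nat_1 of_nat_add of_nat_mult of_nat_numeral)+
    show "(\<lambda>x. 8 * tm (a,b,c) x) ((\<lambda>(A,B,C). ((A-1) div 2, B div 2, (C-1) div 2)) y) = (\<lambda>(A,B,C). 8 / (real A ^ a * real B ^ b * real C ^ c)) y"
      by (simp only: e prod.case tm_def r)
  qed (auto simp: RR_def)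
  also have "\<dots> = 8 * infsum (tm (a,b,c)) RR" by (rule infsum_cmult_right')
  finally show ?thesis .
qed



lemma Tval1: "Tval [s] = 2 * infsum (\<lambda>k. 1 / Pn k ^ s) UNIV"
proof -
  have len: "length [s] = 1" by simp
  have "Tval [s] = infsum (\<lambda>m. 2^1 / (\<Prod>j<1. real (m!j) ^ ([s]!j)))
      {m. length m = 1 \<and> (sorted_wrt (>) m \<and> (\<forall>j<1. 0 < m!j \<and> m!j mod 2 = (1-j) mod 2))}"
    unfolding Tval_def len by simp
  also have "\<dots> = infsum (\<lambda>A. 2^1 / (\<Prod>j<1. real ([A]!j) ^ ([s]!j)))
      {A. sorted_wrt (>) [A] \<and> (\<forall>j<1. 0 < [A]!j \<and> [A]!j mod 2 = (1-j) mod 2)}"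
    by (rule list1_infsum)
  also have "\<dots> = infsum (\<lambda>A. 2 / real A ^ s) {A. odd A}"
  proof -
    have "{A. sorted_wrt (>) [A] \<and> (\<forall>j<1. 0 < [A]!j \<and> [A]!j mod 2 = (1-j) mod 2)} = {A. odd A}"
      by (auto simp: odd_iff_mod_2_eq_one)
    then show ?thesis by simp
  qed
  also have "\<dots> = infsum (\<lambda>k. 2 * (1 / Pn k ^ s)) UNIV"
  proof (rule infsum_reindex_bij_witness[of _ "\<lambda>k. 2*k+1" "\<lambda>A. (A-1) div 2"])
    fix A :: nat assume "A \<in> {A. odd A}"
    then have h: "odd A" by simp
    show "2 * ((A - 1) div 2) + 1 = A" by (rule odd_half[OF h])
    have r: "Pn ((A - 1) div 2) = real A"
      using odd_half[OF h] unfolding Pn_def by (metis of_nat_1 of_nat_add of_nat_mult of_nat_numeral)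
    show "2 * (1 / Pn ((A - 1) div 2) ^ s) = 2 / real A ^ s" by (simp only: r)
  qed auto
  also have "\<dots> = 2 * infsum (\<lambda>k. 1 / Pn k ^ s) UNIV" by (rule infsum_cmult_right')
  finally show ?thesis .
qed

lemma Tval2: "Tval [s,t] = 4 * infsum (\<lambda>(j,k). 1 / (Qn j ^ s * Pn k ^ t)) {(j,k). k < j}"
proof -
  have len: "length [s,t] = 2" by simp
  have "Tval [s,t] = infsum (\<lambda>m. 2^2 / (\<Prod>j<2. real (m!j) ^ ([s,t]!j)))
      {m. length m = 2 \<and> (sorted_wrt (>) m \<and> (\<forall>j<2. 0 < m!j \<and> m!j mod 2 = (2-j) mod 2))}"
    unfolding Tval_def len by simp
  also have "\<dots> = infsum (\<lambda>(A,B). 2^2 / (\<Prod>j<2. real ([A,B]!j) ^ ([s,t]!j)))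
      {(A,B). sorted_wrt (>) [A,B] \<and> (\<forall>j<2. 0 < [A,B]!j \<and> [A,B]!j mod 2 = (2-j) mod 2)}"
    by (rule list2_infsum)
  also have "\<dots> = infsum (\<lambda>(A,B). 4 / (real A ^ s * real B ^ t)) {(A,B). B < A \<and> even A \<and> odd B}"
  proof -
    have "{(A,B). sorted_wrt (>) [A,B] \<and> (\<forall>j<2. 0 < [A,B]!j \<and> [A,B]!j mod 2 = (2-j) mod 2)} = {(A,B). B < A \<and> even A \<and> odd B}"
      unfolding all_less_2 by (auto simp: odd_iff_mod_2_eq_one even_iff_mod_2_eq_zero)
    moreover have "(\<Prod>j<(2::nat). f j) = f 0 * (f 1 :: real)" for f
      by (simp add: numeral_2_eq_2)
    ultimately show ?thesis by simp
  qed
  also have "\<dots> = infsum (\<lambda>x. 4 * (\<lambda>(j,k). 1 / (Qn j ^ s * Pn k ^ t)) x) {(j,k). k < j}"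
  proof (rule infsum_reindex_bij_witness[of _ "\<lambda>(j,k). (2*j, 2*k+1)" "\<lambda>(A,B). (A div 2, (B-1) div 2)"])
    fix y :: "nat \<times> nat"
    assume y: "y \<in> {(A,B). B < A \<and> even A \<and> odd B}"
    then obtain A B where e: "y = (A,B)" and h: "B < A" "even A" "odd B" by auto
    show "(\<lambda>(j,k). (2*j, 2*k+1)) ((\<lambda>(A,B). (A div 2, (B-1) div 2)) y) = y"
      using h by (simp add: e odd_half even_half)
    show "(\<lambda>(A,B). (A div 2, (B-1) div 2)) y \<in> {(j,k). k < j}"
      using h even_odd_lt[of A B] by (simp add: e)
    have r: "Qn (A div 2) = real A" "Pn ((B - 1) div 2) = real B"
      using even_half[OF h(2)] odd_half[OF h(3)] unfolding Pn_def Qn_def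
      by (metis of_nat_1 of_nat_add of_nat_mult of_nat_numeral)+
    show "(\<lambda>x. 4 * (\<lambda>(j,k). 1 / (Qn j ^ s * Pn k ^ t)) x) ((\<lambda>(A,B). (A div 2, (B-1) div 2)) y) = (\<lambda>(A,B). 4 / (real A ^ s * real B ^ t)) y"
      by (simp only: e prod.case r)
  qed auto
  also have "\<dots> = 4 * infsum (\<lambda>(j,k). 1 / (Qn j ^ s * Pn k ^ t)) {(j,k). k < j}" by (rule infsum_cmult_right')
  finally show ?thesis .
qed

lemma Tval_2: "Tval [2] = pi^2/4"
proof -
  have "((\<lambda>k. 1 / Pn k ^ 2) has_sum (pi^2/8)) UNIV"
    using sums_nonneg_imp_has_sum[OF odd_squares_sums] by (simp add: Pn_def)
  then show ?thesis unfolding Tval1 by (simp add: infsumI)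
qed



definition Dn :: "nat \<Rightarrow> real" where "Dn j = (\<Sum>k<j. \<Sum>k'<k. 1 / (Pn k * Pn k'))"
definition En :: "nat \<Rightarrow> real" where "En j = (\<Sum>k<j. 1 / Pn k ^ 2)"
definition Reoo :: "(nat \<times> nat \<times> nat) set" where "Reoo = {(j,k,k'). k' < k \<and> k < j}"

lemma oh_Pn: "oh j = (\<Sum>k<j. 1 / Pn k)" by (simp add: oh_def Pn_def)

lemma oh_sq: "oh j ^ 2 = 2 * Dn j + En j"
proof (induction j)
  case 0 then show ?case by (simp add: oh_def Dn_def En_def)
next
  case (Suc j)
  have a: "oh (Suc j) = oh j + 1 / Pn j" by (simp add: oh_Pn)
  have b: "Dn (Suc j) = Dn j + oh j / Pn j"
    by (simp add: Dn_def oh_Pn sum_divide_distrib mult_ac)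
  have c: "En (Suc j) = En j + 1 / Pn j ^ 2" by (simp add: En_def)
  show ?case unfolding a b c power2_sum using Suc.IH by (simp add: power_divide field_simps)
qed

lemma Dn_nonneg: "0 \<le> Dn j" unfolding Dn_def by (intro sum_nonneg) (auto simp: Pn_def)
lemma En_nonneg: "0 \<le> En j" unfolding En_def by (intro sum_nonneg) (auto simp: Pn_def)

lemma D_summable:
  assumes u: "u \<ge> 2"
  shows "(\<lambda>j. Dn j / Qn j ^ u) summable_on UNIV"
proof (rule summable_on_comparison_test[OF S4_summable[OF u]])
  fix j :: nat
  show "0 \<le> Dn j / Qn j ^ u" using Dn_nonneg by (simp add: Qn_def)
  have "Dn j \<le> oh j ^ 2" using oh_sq[of j] Dn_nonneg[of j] En_nonneg[of j] by simp
  then show "Dn j / Qn j ^ u \<le> oh j ^ 2 / Qn j ^ u" by (rule divide_right_mono) (simp add: Qn_def)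
qed

lemma E_summable:
  assumes u: "u \<ge> 2"
  shows "(\<lambda>j. En j / Qn j ^ u) summable_on UNIV"
proof (rule summable_on_comparison_test[OF S4_summable[OF u]])
  fix j :: nat
  show "0 \<le> En j / Qn j ^ u" using En_nonneg by (simp add: Qn_def)
  have "En j \<le> oh j ^ 2" using oh_sq[of j] Dn_nonneg[of j] En_nonneg[of j] by simp
  then show "En j / Qn j ^ u \<le> oh j ^ 2 / Qn j ^ u" by (rule divide_right_mono) (simp add: Qn_def)
qed

lemma Veoo_has_sum:
  assumes u: "u \<ge> 2"
  shows "((\<lambda>(j,k,k'). 1 / (Qn j ^ u * Pn k * Pn k')) has_sum (\<Sum>\<^sub>\<infinity>j. Dn j / Qn j ^ u)) Reoo"
proof -
  define f where "f = (\<lambda>(j::nat,(k::nat,k'::nat)). 1 / (Qn j ^ u * Pn k * Pn k'))"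
  have inner: "((\<lambda>y. f (j, y)) has_sum (Dn j / Qn j ^ u)) (Sigma {..<j} (\<lambda>k. {..<k}))" for j
  proof (rule has_sum_finiteI)
    have "(\<Sum>y\<in>Sigma {..<j} (\<lambda>k. {..<k}). f (j, y)) = (\<Sum>k<j. \<Sum>k'<k. f (j, (k, k')))"
      by (subst sum.Sigma) auto
    also have "\<dots> = Dn j / Qn j ^ u"
      by (simp add: f_def Dn_def sum_divide_distrib mult_ac)
    finally show "Dn j / Qn j ^ u = (\<Sum>y\<in>Sigma {..<j} (\<lambda>k. {..<k}). f (j, y))" ..
  qed auto
  have sm: "(\<lambda>j. Dn j / Qn j ^ u) summable_on UNIV" by (rule D_summable[OF u])
  have "(f has_sum (\<Sum>\<^sub>\<infinity>j. Dn j / Qn j ^ u)) (Sigma UNIV (\<lambda>j. Sigma {..<j} (\<lambda>k. {..<k})))"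
    by (rule has_sum_nonneg_Sigma[OF inner has_sum_infsum[OF sm]]) (auto simp: f_def Pn_def Qn_def)
  then show ?thesis
    by (rule has_sum_reindex_bij_witness[of Reoo "\<lambda>(j,(k,k')). (j,k,k')" "\<lambda>(j,k,k'). (j,(k,k'))", THEN iffD2, rotated -1])
       (auto simp: Reoo_def f_def)
qed

lemma Veo2_has_sum:
  assumes u: "u \<ge> 2"
  shows "((\<lambda>(j,k). 1 / (Qn j ^ u * Pn k ^ 2)) has_sum (\<Sum>\<^sub>\<infinity>j. En j / Qn j ^ u)) {(j,k). k < j}"
proof -
  define f where "f = (\<lambda>(j::nat,k::nat). 1 / (Qn j ^ u * Pn k ^ 2))"
  have inner: "((\<lambda>k. f (j, k)) has_sum (En j / Qn j ^ u)) {..<j}" for j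
    by (rule has_sum_finiteI) (simp_all add: f_def En_def sum_divide_distrib mult_ac)
  have sm: "(\<lambda>j. En j / Qn j ^ u) summable_on UNIV" by (rule E_summable[OF u])
  have hs: "(f has_sum (\<Sum>\<^sub>\<infinity>j. En j / Qn j ^ u)) (Sigma UNIV (\<lambda>j. {..<j}))"
    by (rule has_sum_nonneg_Sigma[OF inner has_sum_infsum[OF sm]]) (auto simp: f_def Pn_def Qn_def)
  have e: "Sigma UNIV (\<lambda>j. {..<j}) = {(j,k). k < j}" by auto
  show ?thesis using hs unfolding e f_def .
qed

lemma S4_decomp:
  assumes u: "u \<ge> 2"
  shows "(\<Sum>\<^sub>\<infinity>j. oh j ^ 2 / Qn j ^ u) =
     2 * infsum (\<lambda>(j,k,k'). 1 / (Qn j ^ u * Pn k * Pn k')) Reoo + infsum (\<lambda>(j,k). 1 / (Qn j ^ u * Pn k ^ 2)) {(j,k). k < j}"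
proof -
  have eD: "infsum (\<lambda>(j,k,k'). 1 / (Qn j ^ u * Pn k * Pn k')) Reoo = (\<Sum>\<^sub>\<infinity>j. Dn j / Qn j ^ u)"
    by (rule infsumI[OF Veoo_has_sum[OF u]])
  have eE: "infsum (\<lambda>(j,k). 1 / (Qn j ^ u * Pn k ^ 2)) {(j,k). k < j} = (\<Sum>\<^sub>\<infinity>j. En j / Qn j ^ u)"
    by (rule infsumI[OF Veo2_has_sum[OF u]])
  have "((\<lambda>j. 2 * (Dn j / Qn j ^ u) + En j / Qn j ^ u) has_sum (2 * (\<Sum>\<^sub>\<infinity>j. Dn j / Qn j ^ u) + (\<Sum>\<^sub>\<infinity>j. En j / Qn j ^ u))) UNIV"
    by (intro has_sum_add has_sum_cmult_right has_sum_infsum D_summable E_summable u)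
  moreover have "2 * (Dn j / Qn j ^ u) + En j / Qn j ^ u = oh j ^ 2 / Qn j ^ u" for j
    by (simp add: oh_sq add_divide_distrib)
  ultimately have "((\<lambda>j. oh j ^ 2 / Qn j ^ u) has_sum (2 * (\<Sum>\<^sub>\<infinity>j. Dn j / Qn j ^ u) + (\<Sum>\<^sub>\<infinity>j. En j / Qn j ^ u))) UNIV"
    by simp
  then show ?thesis unfolding eD eE by (rule infsumI)
qed



definition T3 :: "(nat \<times> nat \<times> nat) set" where "T3 = {(A,B,C). C < B \<and> B < A \<and> 0 < C}"
definition tau :: "nat \<Rightarrow> nat \<times> nat \<times> nat \<Rightarrow> real" where
  "tau u = (\<lambda>(A,B,C). 1 / (real A ^ u * real B * real C))"

lemma esum3: "esum [u,1,1] [z0,z1,z2] = infsum (\<lambda>(A,B,C). z0^A * z1^B * z2^C * tau u (A,B,C)) T3"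
proof -
  have len: "length [u,1,1::nat] = 3" by simp
  have "esum [u,1,1] [z0,z1,z2] = infsum (\<lambda>n. \<Prod>j<3. ([z0,z1,z2] ! j) ^ (n ! j) / real (n ! j) ^ ([u,1,1] ! j))
     {n. length n = 3 \<and> (sorted_wrt (>) n \<and> (\<forall>j<3. 0 < n ! j))}"
    unfolding esum_def len by simp
  also have "\<dots> = infsum (\<lambda>(A,B,C). \<Prod>j<3. ([z0,z1,z2] ! j) ^ ([A,B,C] ! j) / real ([A,B,C] ! j) ^ ([u,1,1] ! j))
     {(A,B,C). sorted_wrt (>) [A,B,C] \<and> (\<forall>j<3. 0 < [A,B,C] ! j)}"
    by (rule list3_infsum)
  also have "{(A,B,C). sorted_wrt (>) [A,B,C] \<and> (\<forall>j<3. 0 < [A,B,C] ! j)} = T3"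
    unfolding all_less_3 T3_def by auto
  finally show ?thesis unfolding prod3 by (simp add: tau_def case_prod_unfold)
qed

lemma harm_ge_partial: "(\<Sum>B\<in>{1..<A}. 1 / real B) \<le> harm A"
proof -
  have "(\<Sum>B\<in>{1..<A}. 1 / real B) \<le> (\<Sum>B\<in>{1..A}. 1 / real B)"
    by (intro sum_mono2) auto
  also have "\<dots> = harm A" unfolding harm_def by (simp add: inverse_eq_divide)
  finally show ?thesis .
qed

lemma tau_summable:
  assumes u: "u \<ge> 2"
  shows "tau u summable_on T3"
proof -
  define I where "I A = {(B,C). C < B \<and> B < A \<and> 0 < (C::nat)}" for A :: nat
  define g where "g A = (\<Sum>y\<in>I A. tau u (A, y))" for A
  have finI: "finite (I A)" for A
    by (rule finite_subset[of _ "{..A} \<times> {..A}"]) (auto simp: I_def)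
  have inner: "((\<lambda>y. tau u (A, y)) has_sum g A) (I A)" for A
    by (rule has_sum_finiteI[OF finI]) (simp add: g_def)
  have gb: "g A \<le> 4 * (1 + harm A ^ 2) / (real A + 1)^2" for A
  proof (cases "A = 0")
    case True
    then have "I A = {}" by (auto simp: I_def)
    then show ?thesis by (simp add: g_def)
  next
    case False
    have "g A = (\<Sum>(B,C)\<in>I A. (1 / real A ^ u) * (1 / real B * (1 / real C)))"
      unfolding g_def by (intro sum.cong refl) (auto simp: tau_def)
    also have "\<dots> = (1 / real A ^ u) * (\<Sum>(B,C)\<in>I A. 1 / real B * (1 / real C))"
      by (simp add: sum_distrib_left case_prod_unfold)
    finally have gA: "g A = (1 / real A ^ u) * (\<Sum>(B,C)\<in>I A. 1 / real B * (1 / real C))" .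
    have "(\<Sum>(B,C)\<in>I A. 1 / real B * (1 / real C)) \<le> (\<Sum>(B,C)\<in>{1..<A} \<times> {1..<A}. 1 / real B * (1 / real C))"
      by (intro sum_mono2) (auto simp: I_def)
    also have "\<dots> = (\<Sum>B\<in>{1..<A}. 1 / real B) * (\<Sum>C\<in>{1..<A}. 1 / real C)"
      by (simp add: sum_product sum.cartesian_product)
    also have "\<dots> \<le> harm A * harm A"
      by (intro mult_mono harm_ge_partial) (auto intro: sum_nonneg harm_nonneg)
    finally have S: "(\<Sum>(B,C)\<in>I A. 1 / real B * (1 / real C)) \<le> harm A * harm A" .
    have "g A \<le> (1 / real A ^ u) * (harm A * harm A)" unfolding gA
      by (rule mult_left_mono[OF S]) simp
    also have "\<dots> = harm A ^ 2 / real A ^ u" by (simp add: power2_eq_square)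
    also have "\<dots> \<le> (1 + harm A ^ 2) / ((real A + 1)^2 / 4)"
    proof (rule frac_le)
      have "(real A + 1)^2 \<le> (2 * real A)^2" using False by (intro power_mono) auto
      also have "\<dots> = 4 * real A ^ 2" by (simp add: power_mult_distrib)
      also have "real A ^ 2 \<le> real A ^ u" using False u by (intro power_increasing) auto
      finally show "(real A + 1)^2 / 4 \<le> real A ^ u" by simp
    qed auto
    also have "\<dots> = 4 * (1 + harm A ^ 2) / (real A + 1)^2" by (simp add: field_simps)
    finally show ?thesis .
  qed
  have gs: "g summable_on UNIV"
  proof (rule summable_harm2[of 4])
    fix j show "g j \<le> 4 * (1 + harm j ^ 2) / (real j + 1)^2" by (rule gb)
    show "0 \<le> g j" unfolding g_def by (intro sum_nonneg) (auto simp: tau_def)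
  qed simp
  have "tau u summable_on Sigma UNIV I"
    by (rule summable_on_SigmaI[OF inner]) (use gs in \<open>auto simp: tau_def\<close>)
  moreover have "Sigma UNIV I = T3" by (auto simp: I_def T3_def)
  ultimately show ?thesis by simp
qed



lemma real_odd_half: "odd A \<Longrightarrow> Pn ((A - 1) div 2) = real A"
  using odd_half[of A] unfolding Pn_def by (metis of_nat_1 of_nat_add of_nat_mult of_nat_numeral)
lemma real_even_half: "even A \<Longrightarrow> Qn (A div 2) = real A"
  using even_half[of A] unfolding Qn_def by (metis of_nat_mult of_nat_numeral)

lemma oeo_reindex:
  "infsum (tau u) {(A,B,C). C < B \<and> B < A \<and> 0 < C \<and> odd A \<and> even B \<and> odd C} = infsum (tm (u,1,1)) RR"
proof (rule infsum_reindex_bij_witness[of _ "\<lambda>(i,j,k). (2*i+1, 2*j, 2*k+1)" "\<lambda>(A,B,C). ((A-1) div 2, B div 2, (C-1) div 2)"])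
  fix y :: "nat \<times> nat \<times> nat"
  assume y: "y \<in> {(A,B,C). C < B \<and> B < A \<and> 0 < C \<and> odd A \<and> even B \<and> odd C}"
  then obtain A B C where e: "y = (A,B,C)" and h: "C < B" "B < A" "0 < C" "odd A" "even B" "odd C" by auto
  show "(\<lambda>(i,j,k). (2*i+1, 2*j, 2*k+1)) ((\<lambda>(A,B,C). ((A-1) div 2, B div 2, (C-1) div 2)) y) = y"
    using h by (simp add: e odd_half even_half)
  show "(\<lambda>(A,B,C). ((A-1) div 2, B div 2, (C-1) div 2)) y \<in> RR"
    using h odd_even_lt[of A B] even_odd_lt[of B C] by (simp add: e RR_def)
  show "tm (u,1,1) ((\<lambda>(A,B,C). ((A-1) div 2, B div 2, (C-1) div 2)) y) = tau u y"
    by (simp only: e prod.case tm_def real_odd_half[OF h(4)] real_even_half[OF h(5)] real_odd_half[OF h(6)] tau_def) simp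
qed (auto simp: RR_def)

lemma eoo_reindex:
  "infsum (tau u) {(A,B,C). C < B \<and> B < A \<and> 0 < C \<and> even A \<and> odd B \<and> odd C}
     = infsum (\<lambda>(j,k,k'). 1 / (Qn j ^ u * Pn k * Pn k')) Reoo"
proof (rule infsum_reindex_bij_witness[of _ "\<lambda>(j,k,k'). (2*j, 2*k+1, 2*k'+1)" "\<lambda>(A,B,C). (A div 2, (B-1) div 2, (C-1) div 2)"])
  fix y :: "nat \<times> nat \<times> nat"
  assume y: "y \<in> {(A,B,C). C < B \<and> B < A \<and> 0 < C \<and> even A \<and> odd B \<and> odd C}"
  then obtain A B C where e: "y = (A,B,C)" and h: "C < B" "B < A" "0 < C" "even A" "odd B" "odd C" by auto
  show "(\<lambda>(j,k,k'). (2*j, 2*k+1, 2*k'+1)) ((\<lambda>(A,B,C). (A div 2, (B-1) div 2, (C-1) div 2)) y) = y"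
    using h by (simp add: e odd_half even_half)
  show "(\<lambda>(A,B,C). (A div 2, (B-1) div 2, (C-1) div 2)) y \<in> Reoo"
    using h odd_odd_lt[of B C] even_odd_lt[of A B] by (simp add: e Reoo_def)
  show "(\<lambda>(j,k,k'). 1 / (Qn j ^ u * Pn k * Pn k')) ((\<lambda>(A,B,C). (A div 2, (B-1) div 2, (C-1) div 2)) y) = tau u y"
    by (simp only: e prod.case real_even_half[OF h(4)] real_odd_half[OF h(5)] real_odd_half[OF h(6)] tau_def)
qed (auto simp: Reoo_def)

lemma tau_nonneg: "0 \<le> tau u x" by (auto simp: tau_def case_prod_unfold)

lemma esum_summable:
  assumes u: "u \<ge> 2" and z: "\<bar>z0\<bar> = 1" "\<bar>z1\<bar> = 1" "\<bar>z2\<bar> = 1"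
  shows "(\<lambda>(A,B,C). z0^A * z1^B * z2^C * tau u (A,B,C)) summable_on T3"
proof (rule abs_summable_summable)
  show "(\<lambda>x. norm ((\<lambda>(A,B,C). z0^A * z1^B * z2^C * tau u (A,B,C)) x)) summable_on T3"
    by (rule summable_on_comparison_test[OF tau_summable[OF u]])
       (auto simp: abs_mult power_abs z tau_nonneg case_prod_unfold)
qed

lemma esum_combo:
  assumes u: "u \<ge> 2"
  shows "esum [u,1,1] [1,-1,1] - esum [u,1,1] [-1,1,1] + esum [u,1,1] [-1,1,-1] - esum [u,1,1] [1,-1,-1]
    = 4 * infsum (tm (u,1,1)) RR - 4 * infsum (\<lambda>(j,k,k'). 1 / (Qn j ^ u * Pn k * Pn k')) Reoo"
proof -
  define e where "e z0 z1 z2 = (\<lambda>(A,B,C). z0^A * z1^B * z2^C * tau u (A,B,C))" for z0 z1 z2 :: real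
  have s: "e z0 z1 z2 summable_on T3" if "\<bar>z0\<bar> = 1" "\<bar>z1\<bar> = 1" "\<bar>z2\<bar> = 1" for z0 z1 z2
    unfolding e_def by (rule esum_summable[OF u that])
  define P1 where "P1 = (\<lambda>(A::nat,B::nat,C::nat). odd A \<and> even B \<and> odd C)"
  define P2 where "P2 = (\<lambda>(A::nat,B::nat,C::nat). even A \<and> odd B \<and> odd C)"
  define h1 where "h1 x = (if P1 x then tau u x else 0)" for x
  define h2 where "h2 x = (if P2 x then tau u x else 0)" for x
  have hs1: "h1 summable_on T3"
    by (rule summable_on_comparison_test[OF tau_summable[OF u]]) (auto simp: h1_def tau_nonneg)
  have hs2: "h2 summable_on T3"
    by (rule summable_on_comparison_test[OF tau_summable[OF u]]) (auto simp: h2_def tau_nonneg)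
  have pt: "e 1 (-1) 1 x - e (-1) 1 1 x + e (-1) 1 (-1) x - e 1 (-1) (-1) x = 4 * h1 x - 4 * h2 x" for x
  proof -
    obtain A B C where x: "x = (A,B,C)" by (cases x)
    show ?thesis unfolding x e_def h1_def h2_def P1_def P2_def
      by (cases "even A"; cases "even B"; cases "even C") (simp_all add: minus_one_power_iff)
  qed
  have "((\<lambda>x. e 1 (-1) 1 x - e (-1) 1 1 x + e (-1) 1 (-1) x - e 1 (-1) (-1) x) has_sum
        (infsum (e 1 (-1) 1) T3 - infsum (e (-1) 1 1) T3 + infsum (e (-1) 1 (-1)) T3 - infsum (e 1 (-1) (-1)) T3)) T3"
    by (intro has_sum_diff has_sum_add has_sum_infsum s) simp_all
  moreover have "((\<lambda>x. 4 * h1 x - 4 * h2 x) has_sum (4 * infsum h1 T3 - 4 * infsum h2 T3)) T3"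
    by (intro has_sum_diff has_sum_cmult_right has_sum_infsum hs1 hs2)
  moreover note pt
  ultimately have eq: "infsum (e 1 (-1) 1) T3 - infsum (e (-1) 1 1) T3 + infsum (e (-1) 1 (-1)) T3 - infsum (e 1 (-1) (-1)) T3
      = 4 * infsum h1 T3 - 4 * infsum h2 T3"
    by (simp add: has_sum_unique)
  have i1: "infsum h1 T3 = infsum (tm (u,1,1)) RR"
  proof -
    have "infsum h1 T3 = infsum (tau u) {(A,B,C). C < B \<and> B < A \<and> 0 < C \<and> odd A \<and> even B \<and> odd C}"
      by (rule infsum_cong_neutral) (auto simp: h1_def P1_def T3_def)
    then show ?thesis using oeo_reindex by simp
  qed
  have i2: "infsum h2 T3 = infsum (\<lambda>(j,k,k'). 1 / (Qn j ^ u * Pn k * Pn k')) Reoo"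
  proof -
    have "infsum h2 T3 = infsum (tau u) {(A,B,C). C < B \<and> B < A \<and> 0 < C \<and> even A \<and> odd B \<and> odd C}"
      by (rule infsum_cong_neutral) (auto simp: h2_def P2_def T3_def)
    then show ?thesis using eoo_reindex by simp
  qed
  have ee: "esum [u,1,1] [z0,z1,z2] = infsum (e z0 z1 z2) T3" for z0 z1 z2
    unfolding esum3 e_def ..
  show ?thesis unfolding ee eq i1 i2 ..
qed



theorem theorem5p5:
  fixes w u :: nat
  assumes "w \<ge> 4" and "u = w - 2"
  shows "(\<Sum>(a, b, c) \<in> {(a, b, c). a + b + c = w \<and> a \<ge> 2 \<and> b \<ge> 1 \<and> c \<ge> 1}.
            Tval [a, b, c])
    = 2 / 3 * Tval [2] * Tval [u] - 2 * Tval [u, 2]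
      + 4 * (esum [u, 1, 1] [1, -1, 1] - esum [u, 1, 1] [-1, 1, 1]
             + esum [u, 1, 1] [-1, 1, -1] - esum [u, 1, 1] [1, -1, -1])"
proof -
  have u: "u \<ge> 2" and w: "w = u + 2" using assms by auto
  define Zu where "Zu = (\<Sum>\<^sub>\<infinity>k. 1 / Pn k ^ u)"
  define V where "V = infsum (tm (u,1,1)) RR"
  define Veoo where "Veoo = infsum (\<lambda>(j,k,k'). 1 / (Qn j ^ u * Pn k * Pn k')) Reoo"
  define Veo2 where "Veo2 = infsum (\<lambda>(j,k). 1 / (Qn j ^ u * Pn k ^ 2)) {(j,k). k < j}"
  have tt: "tm (u,1,1) = toeo u" by (auto simp: fun_eq_iff tm_def toeo_def)
  have V: "(\<Sum>\<^sub>\<infinity>i. Wt i / Pn i ^ u) = V"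
    unfolding V_def tt using infsumI[OF toeo_has_sum[OF u]] by simp
  have "(\<Sum>(a, b, c) \<in> {(a, b, c). a + b + c = w \<and> a \<ge> 2 \<and> b \<ge> 1 \<and> c \<ge> 1}. Tval [a, b, c])
      = (\<Sum>abc\<in>Sw (u+2). 8 * infsum (tm abc) RR)"
    unfolding w Sw_def by (intro sum.cong refl) (auto simp: Tval3)
  also have "\<dots> = 8 * (\<Sum>abc\<in>Sw (u+2). infsum (tm abc) RR)" by (simp add: sum_distrib_left)
  also have "\<dots> = 8 * ((pi^2/24 * Zu + V) + V - (2 * Veoo + Veo2))"
    unfolding main_sum[OF u] S4_decomp[OF u] V Zu_def Veoo_def Veo2_def ..
  finally have L: "(\<Sum>(a, b, c) \<in> {(a, b, c). a + b + c = w \<and> a \<ge> 2 \<and> b \<ge> 1 \<and> c \<ge> 1}. Tval [a, b, c])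
      = 8 * ((pi^2/24 * Zu + V) + V - (2 * Veoo + Veo2))" .
  have R: "2 / 3 * Tval [2] * Tval [u] - 2 * Tval [u, 2]
      + 4 * (esum [u, 1, 1] [1, -1, 1] - esum [u, 1, 1] [-1, 1, 1]
             + esum [u, 1, 1] [-1, 1, -1] - esum [u, 1, 1] [1, -1, -1])
      = 2 / 3 * (pi^2/4) * (2 * Zu) - 2 * (4 * Veo2) + 4 * (4 * V - 4 * Veoo)"
    unfolding esum_combo[OF u] Tval_2 unfolding Tval1 Tval2 Zu_def V_def Veoo_def Veo2_def ..
  show ?thesis unfolding L R by (simp add: algebra_simps)
qed


end
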